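(* Let $\rho$ be $\mathfrak L$-regular, fix $G>0$, and suppose $g\in[0,G]$, $t=g/(K\log K)$. There exists $C=C(G)>0$ (also depending on $\mathfrak L$) such that for all $E_1,E_2\in\mathbb R$, all integers $K\ge2$ and $0\le k\le K-1$, and all $x\in\mathbb R$, $$\int_{x-2}^{x+2}\big(p^{(k)}_{E_1}*p^{(K-k-1)}_{E_2}\big)(y)\,dy\le\frac{C}{1+|x|^{4/3}},$$ and for all $E\in\mathbb R$, $K\ge2$ and $x\in\mathbb R$, $$\rho_E(x)\le\frac{C}{1+|x+E|^{4/3}}.$$
   Context: A probability density $p:\mathbb R\to[0,\infty)$ is $\mathfrak L$-regular ($\mathfrak L>0$) if: (i) $p(x)\le\mathfrak L(1+x^2)^{-1}$ for all $x$; (ii) $p(x)\ge\mathfrak L^{-1}$ for all $x\in[-\mathfrak L^{-1},\mathfrak L^{-1}]$; (iii) $p'$ exists everywhere and $|p'(x)|\le\mathfrak L(1+|x|)^{-1-1/\mathfrak L}$ for all $x$; (iv) for every $v>0$, $\inf_{|x|<v}p(x)>0$; (v) $p'(x)=0$ for only finitely many $x$. $V_0$ denotes a random variable with density $\rho$. Self-energy densities: for $E\in\mathbb R$, $p_E$ is the density of a fixed (arbitrarily chosen) real-valued solution $\Gamma$ of the distributional equation $\Gamma\overset{d}{=}\big(V_0-E-t^2\sum_{i=1}^K\Gamma_i\big)^{-1}$, where $\Gamma_1,\dots,\Gamma_K$ are i.i.d. copies of $\Gamma$ independent of $V_0$. For $M\ge1$, $p^{(M)}_E$ is the density of $t^2\sum_{i=1}^M\Gamma_i$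 with $\Gamma_i$ i.i.d. of density $p_E$; $p^{(0)}_E$ is the point mass at $0$ (so convolution with it is the identity). $\rho_E$ denotes the density of $V_0-E-t^2\sum_{i=1}^{K-1}\Gamma_i$, where $\Gamma_i$ are i.i.d. with density $p_E$ and independent of $V_0$. *)

theory Defs
  imports "HOL-Probability.Probability"
begin

definition prob_density :: "(real \<Rightarrow> real) \<Rightarrow> bool" where
  "prob_density p \<longleftrightarrow> p \<in> borel_measurable borel \<and> (\<forall>x. 0 \<le> p x) \<and>
     (\<integral>\<^sup>+ x. ennreal (p x) \<partial>lborel) = 1"

definition dens :: "(real \<Rightarrow> real) \<Rightarrow> real measure" where
  "dens p = density lborel (\<lambda>x. ennreal (p x))"

definition regular :: "real \<Rightarrow> (real \<Rightarrow> real) \<Rightarrow> bool" where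
  "regular L p \<longleftrightarrow> L > 0 \<and> prob_density p \<and>
     (\<forall>x. p x \<le> L / (1 + x\<^sup>2)) \<and>
     (\<forall>x. -(1/L) \<le> x \<and> x \<le> 1/L \<longrightarrow> p x \<ge> 1/L) \<and>
     (\<forall>x. p differentiable (at x)) \<and>
     (\<forall>x. \<bar>deriv p x\<bar> \<le> L * (1 + \<bar>x\<bar>) powr (-1 - 1/L)) \<and>
     (\<forall>v>0. (INF x\<in>{x. \<bar>x\<bar> < v}. p x) > 0) \<and>
     finite {x. deriv p x = 0}"

text \<open>mu is (the law of) a solution of
  Gamma =d (V0 - E - t^2 sum_{i<K} Gamma_i)^{-1}, V0 with density rho,
  Gamma_1..Gamma_K iid copies of Gamma independent of V0.\<close>
definition sed_fixpoint :: "nat \<Rightarrow> real \<Rightarrow> (real \<Rightarrow> real) \<Rightarrow> real \<Rightarrow> real measure \<Rightarrow> bool" where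
  "sed_fixpoint K t rho E mu \<longleftrightarrow>
     distr (dens rho \<Otimes>\<^sub>M (\<Pi>\<^sub>M i\<in>{..<K}. mu)) borel
        (\<lambda>(v, \<gamma>). 1 / (v - E - t\<^sup>2 * (\<Sum>i<K. \<gamma> i))) = mu"

text \<open>Law p^(M): distribution of t^2 sum_{i<M} Gamma_i, Gamma_i iid with law mu
  (for M = 0 this is the point mass at 0).\<close>
definition sed_sum :: "nat \<Rightarrow> real \<Rightarrow> real measure \<Rightarrow> real measure" where
  "sed_sum M t mu = distr (\<Pi>\<^sub>M i\<in>{..<M}. mu) borel (\<lambda>\<gamma>. t\<^sup>2 * (\<Sum>i<M. \<gamma> i))"

text \<open>rho_E: the (continuous version of the) density of V0 - E - t^2 sum_{i<K-1} Gamma_i,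
  i.e. rho_E(x) = E[rho(x + E + t^2 sum Gamma_i)].\<close>
definition rhoE :: "nat \<Rightarrow> real \<Rightarrow> (real \<Rightarrow> real) \<Rightarrow> real \<Rightarrow> real measure \<Rightarrow> real \<Rightarrow> real" where
  "rhoE K t rho E mu x = (\<integral> s. rho (x + E + s) \<partial>(sed_sum (K - 1) t mu))"

end

theory Submission
  imports Defs
begin


lemma int_inv_sq_pos:
  fixes c :: real assumes c: "c > 0"
  shows "(\<integral>\<^sup>+ z. ennreal (1/z^2) * indicator {c..} z \<partial>lborel) = ennreal (1/c)"
proof -
  have "(\<integral>\<^sup>+ z. ennreal (1/z^2) * indicator {c..} z \<partial>lborel) = ennreal (0 - (- 1/c))"
  proof (rule nn_integral_FTC_atLeast)
    show "(\<lambda>z::real. 1/z^2) \<in> borel_measurable borel" by measurable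
    fix x :: real assume x: "c \<le> x"
    then have "x \<noteq> 0" using c by auto
    then show "((\<lambda>z. - 1/z) has_real_derivative 1/x^2) (at x)"
      by (auto intro!: derivative_eq_intros simp: power2_eq_square)
    show "0 \<le> 1/x^2" by simp
  next
    have "((\<lambda>z::real. inverse z) \<longlongrightarrow> 0) at_top"
      by (rule tendsto_inverse_0_at_top[OF filterlim_ident])
    then have "((\<lambda>z::real. - inverse z) \<longlongrightarrow> - 0) at_top"
      by (rule tendsto_minus)
    then show "((\<lambda>z::real. - 1/z) \<longlongrightarrow> 0) at_top" by (simp add: inverse_eq_divide)
  qed
  then show ?thesis by simp
qed

lemma int_inv_sq:
  fixes c :: real assumes c: "c > 0"
  shows "(\<integral>\<^sup>+ z. ennreal (1/z^2) * indicator {z. c \<le> \<bar>z\<bar>} z \<partial>lborel) = ennreal (2/c)"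
proof -
  have split: "ennreal (1/z^2) * indicator {z. c \<le> \<bar>z\<bar>} z =
     ennreal (1/z^2) * indicator {c..} z + ennreal (1/(-z)^2) * indicator {c..} (-z)" for z
    using c by (auto simp: indicator_def)
  have neg: "(\<integral>\<^sup>+ z. ennreal (1/(-z)^2) * indicator {c..} (-z) \<partial>lborel) = ennreal (1/c)"
  proof -
    have "(\<integral>\<^sup>+ z. ennreal (1/z^2) * indicator {c..} z \<partial>lborel) =
       ennreal \<bar>-1\<bar> * (\<integral>\<^sup>+ z. ennreal (1/(0 + -1*z)^2) * indicator {c..} (0 + -1*z) \<partial>lborel)"
      by (rule nn_integral_real_affine) auto
    then show ?thesis using int_inv_sq_pos[OF c] by simp
  qed
  have "(\<integral>\<^sup>+ z. ennreal (1/z^2) * indicator {z. c \<le> \<bar>z\<bar>} z \<partial>lborel) =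
     (\<integral>\<^sup>+ z. ennreal (1/z^2) * indicator {c..} z \<partial>lborel) + (\<integral>\<^sup>+ z. ennreal (1/(-z)^2) * indicator {c..} (-z) \<partial>lborel)"
    unfolding split by (rule nn_integral_add) auto
  also have "\<dots> = ennreal (2/c)" using int_inv_sq_pos[OF c] neg c
    by (simp add: ennreal_plus[symmetric] del: ennreal_plus)
  finally show ?thesis .
qed

definition H1 :: "real \<Rightarrow> real measure \<Rightarrow> bool" where
  "H1 L \<mu> \<longleftrightarrow> prob_space \<mu> \<and> sets \<mu> = sets borel \<and>
     (\<forall>h \<in> borel_measurable borel. (\<integral>\<^sup>+ w. h w \<partial>\<mu>) \<le> ennreal L * (\<integral>\<^sup>+ z. h (1/z) \<partial>lborel))"

definition trunc :: "real \<Rightarrow> real \<Rightarrow> real \<Rightarrow> real" where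
  "trunc t a w = (if a < \<bar>t^2 * w\<bar> then 0 else t^2 * w)"

lemma trunc_measurable[measurable]: "trunc t a \<in> borel_measurable borel"
  unfolding trunc_def by measurable

lemma H1_emeasure:
  assumes "H1 L \<mu>" "B \<in> sets borel"
  shows "emeasure \<mu> B \<le> ennreal L * emeasure lborel {z. 1/z \<in> B}"
proof -
  have s: "sets \<mu> = sets borel" using assms(1) by (simp add: H1_def)
  have "emeasure \<mu> B = (\<integral>\<^sup>+ w. indicator B w \<partial>\<mu>)"
    using assms(2) s by (simp add: nn_integral_indicator)
  also have "\<dots> \<le> ennreal L * (\<integral>\<^sup>+ z. indicator B (1/z) \<partial>lborel)"
  proof -
    have "\<forall>h \<in> borel_measurable borel. (\<integral>\<^sup>+ w. h w \<partial>\<mu>) \<le> ennreal L * (\<integral>\<^sup>+ z. h (1/z) \<partial>lborel)"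
      using assms(1) unfolding H1_def by blast
    moreover have "indicator B \<in> borel_measurable borel" using assms(2) by simp
    ultimately show ?thesis by blast
  qed
  also have "(\<integral>\<^sup>+ z. indicator B (1/z) \<partial>lborel) = (\<integral>\<^sup>+ z. indicator {z. 1/z \<in> B} z \<partial>lborel)"
    by (simp add: indicator_def)
  also have "\<dots> = emeasure lborel {z. 1/z \<in> B}"
  proof (rule nn_integral_indicator)
    have "(\<lambda>z::real. 1/z) \<in> borel_measurable borel" by measurable
    then have "(\<lambda>z::real. 1/z) -` B \<inter> space borel \<in> sets borel" using assms(2) by (rule measurable_sets)
    then show "{z::real. 1/z \<in> B} \<in> sets lborel" by (simp add: vimage_def)
  qed
  finally show ?thesis .
qed

lemma H1_tail:
  assumes "H1 L \<mu>" "a > 0" "L \<ge> 0"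
  shows "emeasure \<mu> {w. a < \<bar>t^2 * w\<bar>} \<le> ennreal (2 * L * t^2 / a)"
proof -
  have "emeasure \<mu> {w. a < \<bar>t^2 * w\<bar>} \<le> ennreal L * emeasure lborel {z. 1/z \<in> {w. a < \<bar>t^2 * w\<bar>}}"
    by (rule H1_emeasure[OF assms(1)]) measurable
  also have "emeasure lborel {z. 1/z \<in> {w. a < \<bar>t^2 * w\<bar>}} \<le> emeasure lborel {-(t^2/a) .. t^2/a}"
  proof (rule emeasure_mono)
    show "{z. 1/z \<in> {w. a < \<bar>t^2 * w\<bar>}} \<subseteq> {-(t^2/a) .. t^2/a}"
    proof
      fix z :: real assume "z \<in> {z. 1/z \<in> {w. a < \<bar>t^2 * w\<bar>}}"
      then have h: "a < \<bar>t^2 / z\<bar>" by simp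
      then have z: "z \<noteq> 0" using assms(2) by auto
      from h have "a * \<bar>z\<bar> < t^2" using z by (simp add: abs_div field_simps)
      then have "\<bar>z\<bar> \<le> t^2/a" using assms(2) by (simp add: field_simps)
      then show "z \<in> {-(t^2/a) .. t^2/a}" by auto
    qed
  qed simp
  also have "emeasure lborel {-(t^2/a) .. t^2/a} = ennreal (2*t^2/a)"
    using assms(2) by simp
  finally have X: "emeasure \<mu> {w. a < \<bar>t^2 * w\<bar>} \<le> ennreal L * ennreal (2*t^2/a)"
    by (simp add: mult_left_mono)
  have eq: "ennreal L * ennreal (2*t^2/a) = ennreal (2 * L * t^2 / a)"
    using assms by (simp add: ennreal_mult[symmetric])
  show ?thesis using X unfolding eq .
qed



lemma H1_apply:
  assumes "H1 L \<mu>" "h \<in> borel_measurable borel"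
  shows "(\<integral>\<^sup>+ w. h w \<partial>\<mu>) \<le> ennreal L * (\<integral>\<^sup>+ z. h (1/z) \<partial>lborel)"
proof -
  have "\<forall>h \<in> borel_measurable borel. (\<integral>\<^sup>+ w. h w \<partial>\<mu>) \<le> ennreal L * (\<integral>\<^sup>+ z. h (1/z) \<partial>lborel)"
    using assms(1) unfolding H1_def by blast
  then show ?thesis using assms(2) by blast
qed

lemma H1_prob: "H1 L \<mu> \<Longrightarrow> prob_space \<mu>" and H1_sets: "H1 L \<mu> \<Longrightarrow> sets \<mu> = sets borel"
  by (auto simp: H1_def)

lemma sq_lem: "((t::real)^2*w)^2 = t^4*w^2"
  by (simp add: power_mult_distrib flip: power_mult)

lemma H1_mom2:
  assumes H: "H1 L \<mu>" and a: "a > 0" and L: "L \<ge> 0"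
  shows "(\<integral>\<^sup>+ w. ennreal ((trunc t a w)^2) \<partial>\<mu>) \<le> ennreal (t^4 + 2*L*a*t^2)"
proof -
  interpret prob_space \<mu> using H by (rule H1_prob)
  have s: "sets \<mu> = sets borel" using H by (rule H1_sets)
  let ?h = "\<lambda>w. ennreal ((trunc t a w)^2) * indicator {w. 1 < \<bar>w\<bar>} w"
  have hm: "?h \<in> borel_measurable borel" by measurable
  have hm': "?h \<in> borel_measurable \<mu>" using hm unfolding measurable_cong_sets[OF s refl] .
  have pw: "ennreal ((trunc t a w)^2) \<le> ennreal (t^4) + ?h w" for w
  proof (cases "1 < \<bar>w\<bar>")
    case True then show ?thesis by simp
  next
    case False
    have "(trunc t a w)^2 \<le> (t^2*w)^2" by (simp add: trunc_def)
    also have "\<dots> = t^4 * w^2" by (rule sq_lem)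
    also have "\<dots> \<le> t^4 * 1" using False by (intro mult_left_mono) (auto simp: abs_square_le_1)
    finally show ?thesis using False by simp
  qed
  have "(\<integral>\<^sup>+ w. ennreal ((trunc t a w)^2) \<partial>\<mu>) \<le> (\<integral>\<^sup>+ w. ennreal (t^4) + ?h w \<partial>\<mu>)"
    by (rule nn_integral_mono) (rule pw)
  also have "\<dots> = (\<integral>\<^sup>+ w. ennreal (t^4) \<partial>\<mu>) + (\<integral>\<^sup>+ w. ?h w \<partial>\<mu>)"
    by (rule nn_integral_add) (auto simp: hm')
  also have "(\<integral>\<^sup>+ w. ennreal (t^4) \<partial>\<mu>) = ennreal (t^4)"
    by (simp add: emeasure_space_1)
  also have "(\<integral>\<^sup>+ w. ?h w \<partial>\<mu>) \<le> ennreal (2*L*a*t^2)"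
  proof -
    have "(\<integral>\<^sup>+ w. ?h w \<partial>\<mu>) \<le> ennreal L * (\<integral>\<^sup>+ z. ?h (1/z) \<partial>lborel)"
      by (rule H1_apply[OF H hm])
    also have "(\<integral>\<^sup>+ z. ?h (1/z) \<partial>lborel) \<le> ennreal (2*a*t^2)"
    proof (cases "t = 0")
      case True then show ?thesis using a by (simp add: trunc_def)
    next
      case False
      then have t2: "t^2 > 0" by simp
      have pw2: "?h (1/z) \<le> ennreal (t^4) * (ennreal (1/z^2) * indicator {z. t^2/a \<le> \<bar>z\<bar>} z)" for z
      proof (cases "1 < \<bar>1/z\<bar> \<and> \<bar>t^2 * (1/z)\<bar> \<le> a")
        case True
        then have z: "z \<noteq> 0" by auto
        have "t^2 / \<bar>z\<bar> \<le> a" using True by (simp add: abs_mult)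
        then have "t^2 \<le> a * \<bar>z\<bar>" using z by (simp add: pos_divide_le_eq)
        then have "t^2/a \<le> \<bar>z\<bar>" using a by (simp add: field_simps)
        moreover have "(trunc t a (1/z))^2 = t^4 * (1/z^2)"
          using True sq_lem[of t "1/z"] by (simp add: trunc_def power_divide)
        ultimately show ?thesis using True by (simp add: ennreal_mult[symmetric])
      next
        case False then show ?thesis by (auto simp: trunc_def indicator_def)
      qed
      have "(\<integral>\<^sup>+ z. ?h (1/z) \<partial>lborel) \<le> (\<integral>\<^sup>+ z. ennreal (t^4) * (ennreal (1/z^2) * indicator {z. t^2/a \<le> \<bar>z\<bar>} z) \<partial>lborel)"
        by (rule nn_integral_mono) (rule pw2)
      also have "\<dots> = ennreal (t^4) * (\<integral>\<^sup>+ z. ennreal (1/z^2) * indicator {z. t^2/a \<le> \<bar>z\<bar>} z \<partial>lborel)"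
        by (rule nn_integral_cmult) measurable
      also have "\<dots> = ennreal (t^4) * ennreal (2/(t^2/a))"
        using t2 a by (subst int_inv_sq) auto
      also have "\<dots> = ennreal (2*a*t^2)"
        proof -
        have "t^4 * (2/(t^2/a)) = 2*a*t^2"
        proof -
          have "t^4 = t^2 * t^2" by (simp flip: power_add)
          then show ?thesis using t2 by (simp add: field_simps)
        qed
        then show ?thesis using t2 a by (simp add: ennreal_mult[symmetric])
      qed
      finally show ?thesis .
    qed
    then have "ennreal L * (\<integral>\<^sup>+ z. ?h (1/z) \<partial>lborel) \<le> ennreal L * ennreal (2*a*t^2)"
      by (rule mult_left_mono) simp
    also have "\<dots> = ennreal (2*L*a*t^2)" using L a by (simp add: ennreal_mult[symmetric] mult_ac)
    finally show ?thesis .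
  qed
  finally have "(\<integral>\<^sup>+ w. ennreal ((trunc t a w)^2) \<partial>\<mu>) \<le> ennreal (t^4) + ennreal (2*L*a*t^2)"
    by simp
  also have "\<dots> = ennreal (t^4 + 2*L*a*t^2)" using L a by (simp add: ennreal_plus)
  finally show ?thesis .
qed


lemma inv_interval_subset:
  fixes d h t :: real assumes dh: "h < \<bar>d\<bar>" "0 \<le> h"
  shows "{z. 1/z \<in> {w. t^2 * w \<in> {d-h..d+h}}} \<subseteq> {t^2/(d+h) .. t^2/(d-h)}"
proof
  fix z assume "z \<in> {z. 1/z \<in> {w. t^2 * w \<in> {d-h..d+h}}}"
  then have u: "d - h \<le> t^2/z" "t^2/z \<le> d + h" by auto
  define u where "u = t^2/z"
  have u0: "u \<noteq> 0" using u dh unfolding u_def[symmetric] by auto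
  then have z0: "z \<noteq> 0" and t0: "t^2 \<noteq> 0" unfolding u_def by auto
  have zu: "z = t^2/u" using z0 t0 unfolding u_def by (simp add: field_simps)
  have t2: "t^2 > 0" using t0 by (simp add: less_le)
  show "z \<in> {t^2/(d+h) .. t^2/(d-h)}"
  proof (cases "d > 0")
    case True
    then have "0 < d - h" using dh by auto
    then have "0 < u" using u unfolding u_def[symmetric] by auto
    have "t^2/(d+h) \<le> t^2/u" using u \<open>0<u\<close> t2 unfolding u_def[symmetric]
      by (intro divide_left_mono) auto
    moreover have "t^2/u \<le> t^2/(d-h)" using u \<open>0<d-h\<close> t2 unfolding u_def[symmetric]
      by (intro divide_left_mono) auto
    ultimately show ?thesis using zu by simp
  next
    case False
    then have "d + h < 0" using dh by auto
    then have "u < 0" using u unfolding u_def[symmetric] by auto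
    have "t^2/(d+h) \<le> t^2/u" using u \<open>u<0\<close> \<open>d+h<0\<close> t2 unfolding u_def[symmetric]
      by (simp add: divide_le_eq le_divide_eq)
    moreover have "t^2/u \<le> t^2/(d-h)" using u \<open>u<0\<close> \<open>d+h<0\<close> t2 dh unfolding u_def[symmetric]
      by (simp add: divide_le_eq le_divide_eq)
    ultimately show ?thesis using zu by simp
  qed
qed

lemma H1_local:
  assumes H: "H1 L \<mu>" and L: "L \<ge> 0" and dh: "h < \<bar>d\<bar>" "0 \<le> h"
  shows "emeasure \<mu> {w. t^2 * w \<in> {d-h..d+h}} \<le> ennreal (L * (2*h*t^2/(d^2-h^2)))"
proof -
  have diffeq: "t^2/(d-h) - t^2/(d+h) = 2*h*t^2/(d^2-h^2)"
  proof -
    have "d - h \<noteq> 0" "d + h \<noteq> 0" using dh by auto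
    then show ?thesis by (simp add: field_simps power2_eq_square)
  qed
  have "emeasure \<mu> {w. t^2 * w \<in> {d-h..d+h}} \<le> ennreal L * emeasure lborel {z. 1/z \<in> {w. t^2 * w \<in> {d-h..d+h}}}"
    by (rule H1_emeasure[OF H]) measurable
  also have "emeasure lborel {z. 1/z \<in> {w. t^2 * w \<in> {d-h..d+h}}} \<le> emeasure lborel {t^2/(d+h) .. t^2/(d-h)}"
    by (rule emeasure_mono[OF inv_interval_subset[OF dh]]) simp
  also have "emeasure lborel {t^2/(d+h) .. t^2/(d-h)} = ennreal (t^2/(d-h) - t^2/(d+h))"
  proof (rule emeasure_lborel_Icc)
    have "h^2 < d^2" using dh by (metis abs_ge_zero abs_le_square_iff abs_of_nonneg not_le power2_abs)
    then have "0 \<le> 2*h*t^2/(d^2-h^2)" using dh by simp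
    also have "2*h*t^2/(d^2-h^2) = t^2/(d-h) - t^2/(d+h)" using diffeq by simp
    finally show "t^2/(d+h) \<le> t^2/(d-h)" by simp
  qed
  also have "t^2/(d-h) - t^2/(d+h) = 2*h*t^2/(d^2-h^2)" by (rule diffeq)
  finally have X: "emeasure \<mu> {w. t^2 * w \<in> {d-h..d+h}} \<le> ennreal L * ennreal (2*h*t^2/(d^2-h^2))"
    by (simp add: mult_left_mono)
  have "h^2 < d^2" using dh by (metis abs_ge_zero abs_le_square_iff abs_of_nonneg not_le power2_abs)
  then have nn: "0 \<le> 2*h*t^2/(d^2-h^2)" using dh by simp
  have "ennreal L * ennreal (2*h*t^2/(d^2-h^2)) = ennreal (L * (2*h*t^2/(d^2-h^2)))"
    by (rule ennreal_mult[OF L nn, symmetric])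
  then show ?thesis using X by simp
qed



locale hset =
  fixes L t a :: real and \<mu> :: "nat \<Rightarrow> real measure"
  assumes L: "L > 0" and a: "a > 0" and H: "\<And>j. H1 L (\<mu> j)"
begin

lemma prob: "prob_space (\<mu> j)" using H by (rule H1_prob)
lemma sets_mu[measurable_cong]: "sets (\<mu> j) = sets borel" using H by (rule H1_sets)
lemma space_mu[simp]: "space (\<mu> j) = UNIV" using sets_eq_imp_space_eq[OF sets_mu] by simp

lemma PiM_prob: "prob_space (PiM J \<mu>)" by (rule prob_space_PiM) (rule prob)

lemma comp_nn:
  assumes j: "j \<in> J" and f: "f \<in> borel_measurable borel"
  shows "(\<integral>\<^sup>+ \<omega>. f (\<omega> j) \<partial>PiM J \<mu>) = (\<integral>\<^sup>+ w. f w \<partial>\<mu> j)"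
proof -
  have d: "distr (PiM J \<mu>) (\<mu> j) (\<lambda>\<omega>. \<omega> j) = \<mu> j"
    by (rule distr_PiM_component) (auto intro: prob j)
  have fm: "f \<in> borel_measurable (\<mu> j)" using f by simp
  have "(\<integral>\<^sup>+ w. f w \<partial>\<mu> j) = (\<integral>\<^sup>+ w. f w \<partial>distr (PiM J \<mu>) (\<mu> j) (\<lambda>\<omega>. \<omega> j))"
    by (simp add: d)
  also have "\<dots> = (\<integral>\<^sup>+ \<omega>. f (\<omega> j) \<partial>PiM J \<mu>)"
    by (rule nn_integral_distr) (use j fm d in auto)
  finally show ?thesis by simp
qed

lemma comp_em:
  assumes j: "j \<in> J" and B: "B \<in> sets borel"
  shows "emeasure (PiM J \<mu>) {\<omega>\<in>space (PiM J \<mu>). \<omega> j \<in> B} = emeasure (\<mu> j) B"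
proof -
  have "emeasure (PiM J \<mu>) {\<omega>\<in>space (PiM J \<mu>). \<omega> j \<in> B} = (\<integral>\<^sup>+ \<omega>. indicator B (\<omega> j) \<partial>PiM J \<mu>)"
  proof -
    have S: "{\<omega>\<in>space (PiM J \<mu>). \<omega> j \<in> B} \<in> sets (PiM J \<mu>)" using j B by measurable
    show ?thesis
      by (subst nn_integral_indicator[symmetric, OF S]) (auto intro!: nn_integral_cong simp: indicator_def)
  qed
  also have "\<dots> = (\<integral>\<^sup>+ w. indicator B w \<partial>\<mu> j)" using j B by (intro comp_nn) auto
  also have "\<dots> = emeasure (\<mu> j) B" using B by simp
  finally show ?thesis .
qed

lemma lemA:
  assumes J: "finite J" and s: "s > 0"
  shows "emeasure (PiM J \<mu>) {\<omega>\<in>space (PiM J \<mu>). s \<le> (\<Sum>j\<in>J. \<bar>trunc t a (\<omega> j)\<bar>)}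
     \<le> ennreal (real (card J) * real (card J) * (t^4 + 2*L*a*t^2) / s^2)"
proof -
  let ?P = "PiM J \<mu>"
  let ?A = "{\<omega>\<in>space ?P. s \<le> (\<Sum>j\<in>J. \<bar>trunc t a (\<omega> j)\<bar>)}"
  let ?c = "real (card J) / s^2"
  have Am: "?A \<in> sets ?P" by measurable
  have pw: "indicator ?A \<omega> \<le> ennreal (?c * (\<Sum>j\<in>J. (trunc t a (\<omega> j))^2))" if "\<omega> \<in> space ?P" for \<omega>
  proof (cases "\<omega> \<in> ?A")
    case True
    then have "s \<le> (\<Sum>j\<in>J. \<bar>trunc t a (\<omega> j)\<bar>)" by simp
    then have "s^2 \<le> (\<Sum>j\<in>J. \<bar>trunc t a (\<omega> j)\<bar>)^2" using s by (intro power_mono) auto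
    also have "\<dots> = (\<Sum>j\<in>J. \<bar>trunc t a (\<omega> j)\<bar> * 1)^2" by simp
    also have "\<dots> \<le> (\<Sum>j\<in>J. \<bar>trunc t a (\<omega> j)\<bar>^2) * (\<Sum>j\<in>J. 1^2)" by (rule Cauchy_Schwarz_ineq_sum)
    also have "\<dots> = real (card J) * (\<Sum>j\<in>J. (trunc t a (\<omega> j))^2)" by simp
    finally have "1 \<le> ?c * (\<Sum>j\<in>J. (trunc t a (\<omega> j))^2)" using s by (simp add: field_simps)
    then show ?thesis using True by simp
  qed simp
  have "emeasure ?P ?A = (\<integral>\<^sup>+ \<omega>. indicator ?A \<omega> \<partial>?P)" using Am by simp
  also have "\<dots> \<le> (\<integral>\<^sup>+ \<omega>. ennreal (?c * (\<Sum>j\<in>J. (trunc t a (\<omega> j))^2)) \<partial>?P)"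
    by (rule nn_integral_mono) (rule pw)
  also have "\<dots> = (\<integral>\<^sup>+ \<omega>. ennreal ?c * (\<Sum>j\<in>J. ennreal ((trunc t a (\<omega> j))^2)) \<partial>?P)"
    by (intro nn_integral_cong, subst ennreal_mult) (auto intro: sum_nonneg)
  also have "\<dots> = ennreal ?c * (\<integral>\<^sup>+ \<omega>. (\<Sum>j\<in>J. ennreal ((trunc t a (\<omega> j))^2)) \<partial>?P)"
    by (rule nn_integral_cmult) measurable
  also have "(\<integral>\<^sup>+ \<omega>. (\<Sum>j\<in>J. ennreal ((trunc t a (\<omega> j))^2)) \<partial>?P)
      = (\<Sum>j\<in>J. (\<integral>\<^sup>+ \<omega>. ennreal ((trunc t a (\<omega> j))^2) \<partial>?P))"
    by (rule nn_integral_sum) measurable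
  also have "\<dots> = (\<Sum>j\<in>J. (\<integral>\<^sup>+ w. ennreal ((trunc t a w)^2) \<partial>\<mu> j))"
    by (intro sum.cong refl comp_nn) auto
  also have "\<dots> \<le> (\<Sum>j\<in>J. ennreal (t^4 + 2*L*a*t^2))"
    by (intro sum_mono H1_mom2[OF H a]) (use L in auto)
  also have "\<dots> = ennreal (real (card J) * (t^4 + 2*L*a*t^2))"
    using L a by (simp add: ennreal_mult ennreal_of_nat_eq_real_of_nat)
  also have "ennreal ?c * \<dots> = ennreal (real (card J) * real (card J) * (t^4 + 2*L*a*t^2) / s^2)"
    using L a s by (simp add: ennreal_mult[symmetric])
  finally show ?thesis by (simp add: mult_left_mono)
qed

end


context hset begin

lemma lemB:
  assumes j: "j \<in> J"
  shows "emeasure (PiM J \<mu>) {\<omega>\<in>space (PiM J \<mu>). a < \<bar>t^2 * \<omega> j\<bar>} \<le> ennreal (2*L*t^2/a)"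
proof -
  have "emeasure (PiM J \<mu>) {\<omega>\<in>space (PiM J \<mu>). \<omega> j \<in> {w. a < \<bar>t^2 * w\<bar>}} = emeasure (\<mu> j) {w. a < \<bar>t^2 * w\<bar>}"
    by (rule comp_em[OF j]) measurable
  also have "\<dots> \<le> ennreal (2*L*t^2/a)" using H1_tail[OF H a] L by simp
  finally show ?thesis by simp
qed

lemma lemC:
  assumes J: "finite J" and s: "s > 0"
  shows "emeasure (PiM J \<mu>) {\<omega>\<in>space (PiM J \<mu>). s \<le> \<bar>t^2 * (\<Sum>j\<in>J. \<omega> j)\<bar>}
     \<le> ennreal (real (card J) * real (card J) * (t^4 + 2*L*a*t^2) / s^2 + real (card J) * (2*L*t^2/a))"
proof -
  let ?P = "PiM J \<mu>"
  let ?A = "{\<omega>\<in>space ?P. s \<le> (\<Sum>j\<in>J. \<bar>trunc t a (\<omega> j)\<bar>)}"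
  let ?B = "\<lambda>j. {\<omega>\<in>space ?P. a < \<bar>t^2 * \<omega> j\<bar>}"
  have sub: "{\<omega>\<in>space ?P. s \<le> \<bar>t^2 * (\<Sum>j\<in>J. \<omega> j)\<bar>} \<subseteq> ?A \<union> (\<Union>j\<in>J. ?B j)"
  proof
    fix \<omega> assume w: "\<omega> \<in> {\<omega>\<in>space ?P. s \<le> \<bar>t^2 * (\<Sum>j\<in>J. \<omega> j)\<bar>}"
    show "\<omega> \<in> ?A \<union> (\<Union>j\<in>J. ?B j)"
    proof (cases "\<exists>j\<in>J. a < \<bar>t^2 * \<omega> j\<bar>")
      case True then show ?thesis using w by auto
    next
      case False
      then have "t^2 * (\<Sum>j\<in>J. \<omega> j) = (\<Sum>j\<in>J. trunc t a (\<omega> j))"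
        by (auto simp: trunc_def sum_distrib_left intro!: sum.cong)
      then have "\<bar>t^2 * (\<Sum>j\<in>J. \<omega> j)\<bar> \<le> (\<Sum>j\<in>J. \<bar>trunc t a (\<omega> j)\<bar>)"
        by (simp add: sum_abs)
      then show ?thesis using w by auto
    qed
  qed
  have Am: "?A \<in> sets ?P" by measurable
  have Bm: "?B j \<in> sets ?P" if "j \<in> J" for j using that by measurable
  have "emeasure ?P {\<omega>\<in>space ?P. s \<le> \<bar>t^2 * (\<Sum>j\<in>J. \<omega> j)\<bar>} \<le> emeasure ?P (?A \<union> (\<Union>j\<in>J. ?B j))"
    by (rule emeasure_mono[OF sub]) (use Am Bm J in auto)
  also have "\<dots> \<le> emeasure ?P ?A + emeasure ?P (\<Union>j\<in>J. ?B j)"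
    by (rule emeasure_subadditive) (use Am Bm J in auto)
  also have "emeasure ?P (\<Union>j\<in>J. ?B j) \<le> (\<Sum>j\<in>J. emeasure ?P (?B j))"
    by (rule emeasure_subadditive_finite) (use Bm J in auto)
  also have "\<dots> \<le> (\<Sum>j\<in>J. ennreal (2*L*t^2/a))"
    by (intro sum_mono lemB)
  also have "\<dots> = ennreal (real (card J) * (2*L*t^2/a))"
  proof -
    have c0: "0 \<le> 2*L*t^2/a" using L a by simp
    have "ennreal (real (card J) * (2*L*t^2/a)) = ennreal (real (card J)) * ennreal (2*L*t^2/a)"
      by (rule ennreal_mult[OF _ c0]) simp
    then show ?thesis by (simp add: ennreal_of_nat_eq_real_of_nat)
  qed
  also have "emeasure ?P ?A \<le> ennreal (real (card J) * real (card J) * (t^4 + 2*L*a*t^2) / s^2)"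
    by (rule lemA[OF J s])
  finally show ?thesis using L a s by (simp add: ennreal_plus[symmetric] add_mono del: ennreal_plus)
qed

lemma split_nn:
  assumes I: "finite I" "i \<in> I" and f: "f \<in> borel_measurable (PiM I \<mu>)"
  shows "(\<integral>\<^sup>+ \<omega>. f \<omega> \<partial>PiM I \<mu>) = (\<integral>\<^sup>+ X. (\<integral>\<^sup>+ y. f (X(i:=y)) \<partial>\<mu> i) \<partial>PiM (I-{i}) \<mu>)"
proof -
  have ins: "insert i (I - {i}) = I" using I by auto
  have d: "distr (\<mu> i \<Otimes>\<^sub>M PiM (I-{i}) \<mu>) (PiM I \<mu>) (\<lambda>(x, X). X(i := x)) = PiM I \<mu>"
    using distr_pair_PiM_eq_PiM[of "I-{i}" \<mu> i] prob unfolding ins by blast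
  have um: "(\<lambda>(x, X). X(i := x)) \<in> measurable (\<mu> i \<Otimes>\<^sub>M PiM (I-{i}) \<mu>) (PiM I \<mu>)"
  proof -
    have "(\<lambda>p. (snd p)(i := fst p)) \<in> measurable (\<mu> i \<Otimes>\<^sub>M PiM (I-{i}) \<mu>) (PiM I \<mu>)"
      by (rule measurable_fun_upd[where J="I-{i}"]) (use I in auto)
    then show ?thesis by (simp add: case_prod_beta')
  qed
  interpret pr: prob_space "PiM (I-{i}) \<mu>" by (rule PiM_prob)
  interpret pi: prob_space "\<mu> i" by (rule prob)
  interpret pair_sigma_finite "\<mu> i" "PiM (I-{i}) \<mu>" ..
  have "(\<integral>\<^sup>+ \<omega>. f \<omega> \<partial>PiM I \<mu>) = (\<integral>\<^sup>+ \<omega>. f \<omega> \<partial>distr (\<mu> i \<Otimes>\<^sub>M PiM (I-{i}) \<mu>) (PiM I \<mu>) (\<lambda>(x, X). X(i := x)))"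
    by (simp add: d)
  also have "\<dots> = (\<integral>\<^sup>+ p. f ((\<lambda>(x, X). X(i := x)) p) \<partial>(\<mu> i \<Otimes>\<^sub>M PiM (I-{i}) \<mu>))"
    by (rule nn_integral_distr[OF um]) (simp add: d f)
  also have "\<dots> = (\<integral>\<^sup>+ X. (\<integral>\<^sup>+ y. f (X(i:=y)) \<partial>\<mu> i) \<partial>PiM (I-{i}) \<mu>)"
  proof -
    have fm: "(\<lambda>p. f ((\<lambda>(x, X). X(i := x)) p)) \<in> borel_measurable (\<mu> i \<Otimes>\<^sub>M PiM (I-{i}) \<mu>)"
      using measurable_comp[OF um f] by (simp add: comp_def)
    show ?thesis using nn_integral_snd[OF fm] by simp
  qed
  finally show ?thesis .
qed

end


context hset begin

lemma upd_space:
  assumes "X \<in> space (PiM (I-{i}) \<mu>)" "i \<in> I"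
  shows "X(i:=y) \<in> space (PiM I \<mu>)"
proof -
  have "X(i:=y) \<in> PiE (insert i (I-{i})) (\<lambda>j. space (\<mu> j))"
    using assms by (intro PiE_fun_upd) (auto simp: space_PiM)
  moreover have "insert i (I-{i}) = I" using assms by auto
  ultimately show ?thesis by (simp add: space_PiM)
qed

lemma sum_upd: "i \<notin> J \<Longrightarrow> (\<Sum>j\<in>J. (X(i:=y)) j) = (\<Sum>j\<in>J. X j)"
  by (intro sum.cong) auto

lemma lemBi:
  assumes I: "finite I" "i \<in> I" and s: "s > 0"
  shows "emeasure (PiM I \<mu>) {\<omega>\<in>space (PiM I \<mu>). a < \<bar>t^2 * \<omega> i\<bar> \<and> s \<le> \<bar>t^2 * (\<Sum>j\<in>I-{i}. \<omega> j)\<bar>}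
     \<le> ennreal ((2*L*t^2/a) * (real (card (I-{i})) * real (card (I-{i})) * (t^4 + 2*L*a*t^2) / s^2 + real (card (I-{i})) * (2*L*t^2/a)))"
proof -
  let ?P = "PiM I \<mu>" and ?P' = "PiM (I-{i}) \<mu>"
  let ?B = "{\<omega>\<in>space ?P. a < \<bar>t^2 * \<omega> i\<bar> \<and> s \<le> \<bar>t^2 * (\<Sum>j\<in>I-{i}. \<omega> j)\<bar>}"
  let ?C = "{X\<in>space ?P'. s \<le> \<bar>t^2 * (\<Sum>j\<in>I-{i}. X j)\<bar>}"
  let ?G = "{w. a < \<bar>t^2 * w\<bar>}"
  let ?b = "2*L*t^2/a"
  have b0: "0 \<le> ?b" using L a by simp
  have Bm: "?B \<in> sets ?P" using I by measurable
  have Cm: "?C \<in> sets ?P'" by measurable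
  have Gm: "?G \<in> sets borel" by measurable
  have "emeasure ?P ?B = (\<integral>\<^sup>+ \<omega>. indicator ?B \<omega> \<partial>?P)" using Bm by simp
  also have "\<dots> = (\<integral>\<^sup>+ X. (\<integral>\<^sup>+ y. indicator ?B (X(i:=y)) \<partial>\<mu> i) \<partial>?P')"
    by (rule split_nn[OF I]) (use Bm in simp)
  also have "\<dots> \<le> (\<integral>\<^sup>+ X. ennreal ?b * indicator ?C X \<partial>?P')"
  proof (rule nn_integral_mono)
    fix X assume X: "X \<in> space ?P'"
    have "indicator ?B (X(i:=y)) = indicator ?G y * (indicator ?C X :: ennreal)" for y
      using upd_space[OF X I(2), of y] X sum_upd[of i "I-{i}" X y] by (auto simp: indicator_def)
    then have "(\<integral>\<^sup>+ y. indicator ?B (X(i:=y)) \<partial>\<mu> i) = (\<integral>\<^sup>+ y. indicator ?G y * indicator ?C X \<partial>\<mu> i)"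
      by simp
    also have "\<dots> = emeasure (\<mu> i) ?G * indicator ?C X"
      using Gm by (subst nn_integral_multc) auto
    also have "\<dots> \<le> ennreal ?b * indicator ?C X"
      using H1_tail[OF H a, where t=t] L by (intro mult_right_mono) auto
    finally show "(\<integral>\<^sup>+ y. indicator ?B (X(i:=y)) \<partial>\<mu> i) \<le> ennreal ?b * indicator ?C X" .
  qed
  also have "\<dots> = ennreal ?b * emeasure ?P' ?C"
    using Cm by (subst nn_integral_cmult) auto
  also have "\<dots> \<le> ennreal ?b * ennreal (real (card (I-{i})) * real (card (I-{i})) * (t^4 + 2*L*a*t^2) / s^2 + real (card (I-{i})) * (2*L*t^2/a))"
    by (intro mult_left_mono lemC) (use I s in auto)
  also have "\<dots> = ennreal (?b * (real (card (I-{i})) * real (card (I-{i})) * (t^4 + 2*L*a*t^2) / s^2 + real (card (I-{i})) * (2*L*t^2/a)))"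
    by (rule ennreal_mult[symmetric, OF b0]) (use L a s in simp)
  finally show ?thesis .
qed

lemma lemDi:
  assumes I: "finite I" "i \<in> I" and h: "0 \<le> h" and x: "0 < \<bar>x\<bar>" "4*h \<le> \<bar>x\<bar>"
  shows "emeasure (PiM I \<mu>) {\<omega>\<in>space (PiM I \<mu>). \<bar>t^2 * (\<Sum>j\<in>I-{i}. \<omega> j)\<bar> < \<bar>x\<bar>/4 \<and> t^2 * (\<Sum>j\<in>I. \<omega> j) \<in> {x-h..x+h}}
     \<le> ennreal (L * (4*h*t^2/x^2))"
proof -
  let ?P = "PiM I \<mu>" and ?P' = "PiM (I-{i}) \<mu>"
  let ?D = "{\<omega>\<in>space ?P. \<bar>t^2 * (\<Sum>j\<in>I-{i}. \<omega> j)\<bar> < \<bar>x\<bar>/4 \<and> t^2 * (\<Sum>j\<in>I. \<omega> j) \<in> {x-h..x+h}}"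
  let ?c = "L * (4*h*t^2/x^2)"
  have Dm: "?D \<in> sets ?P" using I by measurable
  have "emeasure ?P ?D = (\<integral>\<^sup>+ \<omega>. indicator ?D \<omega> \<partial>?P)" using Dm by simp
  also have "\<dots> = (\<integral>\<^sup>+ X. (\<integral>\<^sup>+ y. indicator ?D (X(i:=y)) \<partial>\<mu> i) \<partial>?P')"
    by (rule split_nn[OF I]) (use Dm in simp)
  also have "\<dots> \<le> (\<integral>\<^sup>+ X. ennreal ?c \<partial>?P')"
  proof (rule nn_integral_mono)
    fix X assume X: "X \<in> space ?P'"
    define W where "W = t^2 * (\<Sum>j\<in>I-{i}. X j)"
    define d where "d = x - W"
    show "(\<integral>\<^sup>+ y. indicator ?D (X(i:=y)) \<partial>\<mu> i) \<le> ennreal ?c"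
    proof (cases "\<bar>W\<bar> < \<bar>x\<bar>/4")
      case False
      then have "indicator ?D (X(i:=y)) = (0::ennreal)" for y
        using sum_upd[of i "I-{i}" X y] by (auto simp: indicator_def W_def)
      then show ?thesis by simp
    next
      case True
      have sumI: "t^2 * (\<Sum>j\<in>I. (X(i:=y)) j) = t^2 * y + W" for y
      proof -
        have "(\<Sum>j\<in>I. (X(i:=y)) j) = (X(i:=y)) i + (\<Sum>j\<in>I-{i}. (X(i:=y)) j)"
          using I by (simp add: sum.remove)
        then show ?thesis using sum_upd[of i "I-{i}" X y] by (simp add: W_def distrib_left)
      qed
      have "indicator ?D (X(i:=y)) \<le> (indicator {w. t^2 * w \<in> {d-h..d+h}} y :: ennreal)" for y
        using sumI[of y] by (auto simp: indicator_def d_def)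
      then have "(\<integral>\<^sup>+ y. indicator ?D (X(i:=y)) \<partial>\<mu> i) \<le> (\<integral>\<^sup>+ y. indicator {w. t^2 * w \<in> {d-h..d+h}} y \<partial>\<mu> i)"
        by (intro nn_integral_mono) auto
      also have "\<dots> = emeasure (\<mu> i) {w. t^2 * w \<in> {d-h..d+h}}"
        by (rule nn_integral_indicator) measurable
      also have "\<dots> \<le> ennreal (L * (2*h*t^2/(d^2-h^2)))"
      proof (rule H1_local[OF H])
        show "0 \<le> L" using L by simp
        show "0 \<le> h" by fact
        show "h < \<bar>d\<bar>" using True x h unfolding d_def by auto
      qed
      also have "\<dots> \<le> ennreal ?c"
      proof (rule ennreal_leI)
        have "\<bar>x\<bar> \<le> \<bar>x - W\<bar> + \<bar>W\<bar>" using abs_triangle_ineq[of "x-W" W] by simp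
        then have d1: "3*\<bar>x\<bar>/4 \<le> \<bar>d\<bar>" using True unfolding d_def by linarith
        have "(3*\<bar>x\<bar>/4)^2 \<le> \<bar>d\<bar>^2" by (rule power_mono[OF d1]) simp
        then have "(3*\<bar>x\<bar>/4)^2 \<le> d^2" by simp
        moreover have "h^2 \<le> (\<bar>x\<bar>/4)^2" using h x by (intro power_mono) auto
        ultimately have dd: "x^2/2 \<le> d^2 - h^2" by (simp add: power2_eq_square field_simps)
        have x2: "0 < x^2" using x by simp
        have "2*h*t^2/(d^2-h^2) \<le> 2*h*t^2/(x^2/2)"
        proof (rule divide_left_mono)
          show "x^2/2 \<le> d^2 - h^2" by (rule dd)
          show "0 \<le> 2*h*t^2" using h by simp
          have "0 < d^2 - h^2" using dd x2 by linarith
          then show "0 < (d^2 - h^2) * (x^2/2)" using x2 by simp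
        qed
        also have "\<dots> = 4*h*t^2/x^2" by simp
        finally show "L * (2*h*t^2/(d^2-h^2)) \<le> ?c" using L by (intro mult_left_mono) auto
      qed
      finally show ?thesis .
    qed
  qed
  also have "\<dots> = ennreal ?c"
  proof -
    interpret prob_space ?P' by (rule PiM_prob)
    show ?thesis by (simp add: emeasure_space_1)
  qed
  finally show ?thesis .
qed

end


context hset begin

lemma lemD:
  assumes I: "finite I" and h: "0 \<le> h" and x: "0 < \<bar>x\<bar>" "4*h \<le> \<bar>x\<bar>"
  defines "N \<equiv> real (card I)" and "V \<equiv> real (card I) * real (card I) * (t^4 + 2*L*a*t^2)" and "\<beta> \<equiv> 2*L*t^2/a"
  shows "emeasure (PiM I \<mu>) {\<omega>\<in>space (PiM I \<mu>). t^2 * (\<Sum>j\<in>I. \<omega> j) \<in> {x-h..x+h}}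
     \<le> ennreal (16*V/x^2 + N * (\<beta> * (16*V/x^2 + N*\<beta>) + L*(4*h*t^2/x^2)))"
proof -
  let ?P = "PiM I \<mu>"
  define s where "s = \<bar>x\<bar>/4"
  have s0: "s > 0" using x by (simp add: s_def)
  let ?T = "{\<omega>\<in>space ?P. t^2 * (\<Sum>j\<in>I. \<omega> j) \<in> {x-h..x+h}}"
  let ?A = "{\<omega>\<in>space ?P. s \<le> (\<Sum>j\<in>I. \<bar>trunc t a (\<omega> j)\<bar>)}"
  let ?B = "\<lambda>i. {\<omega>\<in>space ?P. a < \<bar>t^2 * \<omega> i\<bar> \<and> s \<le> \<bar>t^2 * (\<Sum>j\<in>I-{i}. \<omega> j)\<bar>}"
  let ?D = "\<lambda>i. {\<omega>\<in>space ?P. \<bar>t^2 * (\<Sum>j\<in>I-{i}. \<omega> j)\<bar> < \<bar>x\<bar>/4 \<and> t^2 * (\<Sum>j\<in>I. \<omega> j) \<in> {x-h..x+h}}"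
  have V0: "0 \<le> V" using L a by (simp add: V_def)
  have b0: "0 \<le> \<beta>" using L a by (simp add: \<beta>_def)
  have Am: "?A \<in> sets ?P" by measurable
  have Bm: "?B i \<in> sets ?P" if "i \<in> I" for i using that by measurable
  have Dm: "?D i \<in> sets ?P" if "i \<in> I" for i using that by measurable
  have sub: "?T \<subseteq> ?A \<union> (\<Union>i\<in>I. ?B i \<union> ?D i)"
  proof
    fix \<omega> assume w: "\<omega> \<in> ?T"
    show "\<omega> \<in> ?A \<union> (\<Union>i\<in>I. ?B i \<union> ?D i)"
    proof (cases "\<exists>i\<in>I. a < \<bar>t^2 * \<omega> i\<bar>")
      case True
      then obtain i where i: "i \<in> I" "a < \<bar>t^2 * \<omega> i\<bar>" by blast
      then show ?thesis using w by (cases "s \<le> \<bar>t^2 * (\<Sum>j\<in>I-{i}. \<omega> j)\<bar>") (auto simp: s_def)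
    next
      case False
      then have "t^2 * (\<Sum>j\<in>I. \<omega> j) = (\<Sum>j\<in>I. trunc t a (\<omega> j))"
        by (auto simp: trunc_def sum_distrib_left intro!: sum.cong)
      then have le: "\<bar>t^2 * (\<Sum>j\<in>I. \<omega> j)\<bar> \<le> (\<Sum>j\<in>I. \<bar>trunc t a (\<omega> j)\<bar>)"
        by (simp add: sum_abs)
      have "\<bar>x\<bar> - h \<le> \<bar>t^2 * (\<Sum>j\<in>I. \<omega> j)\<bar>" using w by (auto simp: abs_if)
      then have "s \<le> (\<Sum>j\<in>I. \<bar>trunc t a (\<omega> j)\<bar>)" using le x h unfolding s_def by linarith
      then show ?thesis using w by auto
    qed
  qed
  have "emeasure ?P ?T \<le> emeasure ?P (?A \<union> (\<Union>i\<in>I. ?B i \<union> ?D i))"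
    by (rule emeasure_mono[OF sub]) (use Am Bm Dm I in auto)
  also have "\<dots> \<le> emeasure ?P ?A + emeasure ?P (\<Union>i\<in>I. ?B i \<union> ?D i)"
    by (rule emeasure_subadditive) (use Am Bm Dm I in auto)
  also have "emeasure ?P (\<Union>i\<in>I. ?B i \<union> ?D i) \<le> (\<Sum>i\<in>I. emeasure ?P (?B i \<union> ?D i))"
    by (rule emeasure_subadditive_finite) (use Bm Dm I in auto)
  also have "\<dots> \<le> (\<Sum>i\<in>I. ennreal (\<beta> * (16*V/x^2 + N*\<beta>) + L*(4*h*t^2/x^2)))"
  proof (rule sum_mono)
    fix i assume i: "i \<in> I"
    have c: "real (card (I-{i})) \<le> N" unfolding N_def using I by (simp add: card_mono)
    have "emeasure ?P (?B i \<union> ?D i) \<le> emeasure ?P (?B i) + emeasure ?P (?D i)"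
      by (rule emeasure_subadditive) (use Bm Dm i in auto)
    also have "emeasure ?P (?B i) \<le> ennreal (\<beta> * (real (card (I-{i})) * real (card (I-{i})) * (t^4 + 2*L*a*t^2) / s^2 + real (card (I-{i})) * \<beta>))"
      using lemBi[OF I i s0] unfolding \<beta>_def .
    also have "\<dots> \<le> ennreal (\<beta> * (16*V/x^2 + N*\<beta>))"
    proof (rule ennreal_leI, rule mult_left_mono[OF _ b0], rule add_mono)
      have "real (card (I-{i})) * real (card (I-{i})) * (t^4 + 2*L*a*t^2) / s^2 \<le> V / s^2"
        unfolding V_def using c L a unfolding N_def by (intro divide_right_mono mult_right_mono mult_mono) auto
      also have "V / s^2 = 16*V/x^2" by (simp add: s_def power_divide)
      finally show "real (card (I-{i})) * real (card (I-{i})) * (t^4 + 2*L*a*t^2) / s^2 \<le> 16*V/x^2" .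
      show "real (card (I-{i})) * \<beta> \<le> N * \<beta>" using c b0 by (rule mult_right_mono)
    qed
    also have "emeasure ?P (?D i) \<le> ennreal (L*(4*h*t^2/x^2))" by (rule lemDi[OF I i h x])
    finally have X: "emeasure ?P (?B i \<union> ?D i) \<le> ennreal (\<beta> * (16*V/x^2 + N*\<beta>)) + ennreal (L*(4*h*t^2/x^2))"
      by (simp add: add_mono)
    have n1: "0 \<le> \<beta> * (16*V/x^2 + N*\<beta>)" using b0 V0 unfolding N_def by simp
    have n2: "0 \<le> L*(4*h*t^2/x^2)" using L h by simp
    show "emeasure ?P (?B i \<union> ?D i) \<le> ennreal (\<beta> * (16*V/x^2 + N*\<beta>) + L*(4*h*t^2/x^2))"
      using X unfolding ennreal_plus[OF n1 n2] .
  qed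
  also have "\<dots> = ennreal (N * (\<beta> * (16*V/x^2 + N*\<beta>) + L*(4*h*t^2/x^2)))"
  proof -
    have r0: "0 \<le> \<beta> * (16*V/x^2 + N*\<beta>) + L*(4*h*t^2/x^2)" using b0 V0 L h unfolding N_def by simp
    have "ennreal (N * (\<beta> * (16*V/x^2 + N*\<beta>) + L*(4*h*t^2/x^2))) = ennreal N * ennreal (\<beta> * (16*V/x^2 + N*\<beta>) + L*(4*h*t^2/x^2))"
      by (rule ennreal_mult[OF _ r0]) (simp add: N_def)
    then show ?thesis by (simp add: ennreal_of_nat_eq_real_of_nat N_def)
  qed
  also have "emeasure ?P ?A \<le> ennreal (16*V/x^2)"
  proof -
    have "emeasure ?P ?A \<le> ennreal (real (card I) * real (card I) * (t^4 + 2*L*a*t^2) / s^2)" by (rule lemA[OF I s0])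
    also have "real (card I) * real (card I) * (t^4 + 2*L*a*t^2) / s^2 = 16*V/x^2"
      by (simp add: V_def s_def power_divide)
    finally show ?thesis .
  qed
  finally have X: "emeasure ?P ?T \<le> ennreal (16*V/x^2) + ennreal (N * (\<beta> * (16*V/x^2 + N*\<beta>) + L*(4*h*t^2/x^2)))"
    by (simp add: add_mono)
  have n1: "0 \<le> 16*V/x^2" using V0 by simp
  have n2: "0 \<le> N * (\<beta> * (16*V/x^2 + N*\<beta>) + L*(4*h*t^2/x^2))" using b0 V0 L h unfolding N_def by simp
  show ?thesis using X unfolding ennreal_plus[OF n1 n2] .
qed

end


lemma arith_r:
  fixes L A N t r h :: real
  assumes L: "L > 0" and A: "A \<ge> 0" and N: "N \<ge> 0" and Nt: "N * \<bar>t\<bar> \<le> A" and tA: "\<bar>t\<bar> \<le> A"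
    and r: "r \<ge> 1" and h: "0 \<le> h" "h \<le> r^2"
  defines "V \<equiv> N * N * (t^4 + 2*L*r^2*t^2)" and "\<beta> \<equiv> 2*L*t^2/r^2"
    and "P0 \<equiv> 16*A^4 + 32*L*A^2"
  shows "16*V/r^6 + N * (\<beta> * (16*V/r^6 + N*\<beta>) + L*(4*h*t^2/r^6))
     \<le> (P0 + 2*L*A^2*P0 + 4*L^2*A^4 + 4*L*A^2) / r^4"
proof -
  have r0: "r > 0" using r by simp
  have r2: "r^2 \<ge> 1" using r by (simp add: one_le_power)
  have u: "N*N*t^2 \<le> A^2"
  proof -
    have "(N*\<bar>t\<bar>)^2 \<le> A^2" using Nt N by (intro power_mono) auto
    then show ?thesis by (simp add: power2_eq_square power_mult_distrib mult_ac)
  qed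
  have w: "N*t^2 \<le> A^2"
  proof -
    have "N*\<bar>t\<bar>*\<bar>t\<bar> \<le> A*A" using Nt tA N by (intro mult_mono) auto
    then show ?thesis by (simp add: power2_eq_square mult_ac)
  qed
  have n4: "N*N*t^4 \<le> A^4"
  proof -
    have "(N*t^2)^2 \<le> (A^2)^2" using w N by (intro power_mono) auto
    moreover have "(N*t^2)^2 = N*N*t^4" by algebra
    moreover have "(A^2)^2 = A^4" by (simp flip: power_mult)
    ultimately show ?thesis by simp
  qed
  have V: "16*V/r^6 = 16*(N*N*t^4)/r^6 + 32*L*(N*N*t^2)/r^4"
  proof -
    have r6: "r^6 = r^2*r^4" by (simp flip: power_add)
    show ?thesis using r0 unfolding r6 by (simp add: V_def field_simps)
  qed
  have P: "16*V/r^6 \<le> P0/r^4"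
  proof -
    have "16*(N*N*t^4)/r^6 \<le> 16*A^4/r^6" using n4 r0 by (intro divide_right_mono) auto
    also have "\<dots> \<le> 16*A^4/r^4" using r0 r A by (intro divide_left_mono power_increasing) (auto simp: zero_less_power)
    finally have 1: "16*(N*N*t^4)/r^6 \<le> 16*A^4/r^4" .
    have 2: "32*L*(N*N*t^2)/r^4 \<le> 32*L*A^2/r^4" using u L r0 by (intro divide_right_mono) auto
    show ?thesis using 1 2 V by (simp add: P0_def add_divide_distrib)
  qed
  have P0p: "0 \<le> P0" using L A by (simp add: P0_def)
  have Q: "N*\<beta> \<le> 2*L*A^2/r^2" unfolding \<beta>_def using w L r0 by (simp add: divide_right_mono)
  have Q0: "0 \<le> N*\<beta>" using N L by (simp add: \<beta>_def)
  have V0: "0 \<le> 16*V/r^6" using N L by (simp add: V_def)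
  have e: "N * (\<beta> * (16*V/r^6 + N*\<beta>) + L*(4*h*t^2/r^6)) = (N*\<beta>) * (16*V/r^6) + (N*\<beta>)*(N*\<beta>) + 4*L*h*(N*t^2)/r^6"
    by (simp add: field_simps)
  have QP: "(N*\<beta>) * (16*V/r^6) \<le> 2*L*A^2*P0/r^4"
  proof -
    have "(N*\<beta>) * (16*V/r^6) \<le> (2*L*A^2/r^2) * (P0/r^4)" using Q P Q0 V0 by (intro mult_mono) auto
    also have "\<dots> = (2*L*A^2*P0/r^2)/r^4" by simp
    also have "\<dots> \<le> 2*L*A^2*P0/r^4"
    proof -
      have "P0 \<le> P0*r^2" using P0p r2 by (metis mult_left_mono mult.right_neutral)
      then have "A^2*P0 \<le> A^2*(P0*r^2)" by (rule mult_left_mono) simp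
      then show ?thesis using r2 r0 L A P0p by (intro divide_right_mono) (auto simp: divide_le_eq)
    qed
    finally show ?thesis .
  qed
  have QQ: "(N*\<beta>)*(N*\<beta>) \<le> 4*L^2*A^4/r^4"
  proof -
    have "(N*\<beta>)*(N*\<beta>) \<le> (2*L*A^2/r^2)*(2*L*A^2/r^2)" using Q Q0 by (intro mult_mono) auto
    also have "\<dots> = 4*L^2*A^4/r^4"
    proof -
      have "A^4 = A^2*A^2" "r^4 = r^2*r^2" by (simp_all flip: power_add)
      then show ?thesis by (simp add: power2_eq_square field_simps)
    qed
    finally show ?thesis .
  qed
  have HT: "4*L*h*(N*t^2)/r^6 \<le> 4*L*A^2/r^4"
  proof -
    have "4*L*h*(N*t^2) \<le> 4*L*r^2*A^2" using h w L N by (intro mult_mono) auto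
    then have "4*L*h*(N*t^2)/r^6 \<le> 4*L*r^2*A^2/r^6" using r0 by (intro divide_right_mono) auto
    also have "\<dots> = 4*L*A^2/r^4"
    proof -
      have r6: "r^6 = r^2*r^4" by (simp flip: power_add)
      show ?thesis using r0 unfolding r6 by (simp add: field_simps)
    qed
    finally show ?thesis .
  qed
  show ?thesis unfolding e using P QP QQ HT by (simp add: add_divide_distrib)
qed



definition C0 :: "real \<Rightarrow> real \<Rightarrow> real" where
  "C0 L A = (let P0 = 16*A^4 + 32*L*A^2 in P0 + 2*L*A^2*P0 + 4*L^2*A^4 + 4*L*A^2)"

lemma C0_nonneg: "L \<ge> 0 \<Longrightarrow> C0 L A \<ge> 0"
  by (simp add: C0_def Let_def)

lemma interval_bound:
  fixes L A t x h :: real and I :: "nat set"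
  assumes L: "L > 0" and A: "A \<ge> 0" and H: "\<And>j. H1 L (\<mu> j)" and I: "finite I"
    and Nt: "real (card I) * \<bar>t\<bar> \<le> A" and tA: "\<bar>t\<bar> \<le> A"
    and x: "\<bar>x\<bar> \<ge> 64" and h: "0 \<le> h" "h \<le> \<bar>x\<bar> powr (2/3)"
  shows "measure (PiM I \<mu>) {\<omega>\<in>space (PiM I \<mu>). t^2 * (\<Sum>j\<in>I. \<omega> j) \<in> {x-h..x+h}}
     \<le> C0 L A / \<bar>x\<bar> powr (4/3)"
proof -
  define r where "r = \<bar>x\<bar> powr (1/3)"
  have x0: "\<bar>x\<bar> > 0" using x by simp
  have r0: "r > 0" using x0 by (simp add: r_def)
  have rp: "r^n = \<bar>x\<bar> powr (real n / 3)" for n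
    using x0 unfolding r_def by (subst powr_power) auto
  have r3: "r^3 = \<bar>x\<bar>" using rp[of 3] x0 by simp
  have r2: "r^2 = \<bar>x\<bar> powr (2/3)" using rp[of 2] by simp
  have r4: "r^4 = \<bar>x\<bar> powr (4/3)" using rp[of 4] by simp
  have r6: "r^6 = x^2"
  proof -
    have "r^6 = (r^3)^2" by (simp flip: power_mult)
    then show ?thesis using r3 by simp
  qed
  have r4ge: "r \<ge> 4"
  proof -
    have "(64::real) powr (1/3) \<le> \<bar>x\<bar> powr (1/3)" using x by (intro powr_mono2) auto
    moreover have "(64::real) powr (1/3) = 4"
    proof -
      have "(64::real) = 4 powr 3" by simp
      then have "(64::real) powr (1/3) = 4 powr (3*(1/3))" by (simp add: powr_powr)
      then show ?thesis by simp
    qed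
    ultimately show ?thesis by (simp add: r_def)
  qed
  have a0: "r^2 > 0" using r0 by simp
  interpret hset L t "r^2" \<mu> using L a0 H by unfold_locales auto
  have hr: "h \<le> r^2" using h r2 by simp
  have 4: "4*h \<le> \<bar>x\<bar>"
  proof -
    have "4*h \<le> 4*r^2" using hr by simp
    also have "\<dots> \<le> r * r^2" using r4ge by (intro mult_right_mono) auto
    also have "\<dots> = r^3" by (simp add: power2_eq_square power3_eq_cube)
    finally show ?thesis using r3 by simp
  qed
  have em: "emeasure (PiM I \<mu>) {\<omega>\<in>space (PiM I \<mu>). t^2 * (\<Sum>j\<in>I. \<omega> j) \<in> {x-h..x+h}}
     \<le> ennreal (16*(real (card I) * real (card I) * (t^4 + 2*L*r^2*t^2))/x^2 + real (card I) * ((2*L*t^2/r^2) * (16*(real (card I) * real (card I) * (t^4 + 2*L*r^2*t^2))/x^2 + real (card I)*(2*L*t^2/r^2)) + L*(4*h*t^2/x^2)))"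
    using lemD[OF I h(1) x0 4] by simp
  also have "16*(real (card I) * real (card I) * (t^4 + 2*L*r^2*t^2))/x^2 + real (card I) * ((2*L*t^2/r^2) * (16*(real (card I) * real (card I) * (t^4 + 2*L*r^2*t^2))/x^2 + real (card I)*(2*L*t^2/r^2)) + L*(4*h*t^2/x^2))
     \<le> C0 L A / r^4"
    unfolding r6[symmetric] C0_def Let_def
    by (rule arith_r[OF L A _ Nt tA _ h(1) hr]) (use r4ge in auto)
  finally have "emeasure (PiM I \<mu>) {\<omega>\<in>space (PiM I \<mu>). t^2 * (\<Sum>j\<in>I. \<omega> j) \<in> {x-h..x+h}} \<le> ennreal (C0 L A / r^4)"
    by (simp add: ennreal_leI)
  then have "measure (PiM I \<mu>) {\<omega>\<in>space (PiM I \<mu>). t^2 * (\<Sum>j\<in>I. \<omega> j) \<in> {x-h..x+h}} \<le> C0 L A / r^4"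
    unfolding measure_def by (rule enn2real_leI[rotated]) (use C0_nonneg[of L A] L r0 in simp)
  then show ?thesis using r4 by simp
qed



lemma dens_prob:
  assumes "prob_density p"
  shows "prob_space (dens p)" "sets (dens p) = sets borel"
proof -
  have pm: "p \<in> borel_measurable borel" and int: "(\<integral>\<^sup>+ x. ennreal (p x) \<partial>lborel) = 1"
    using assms by (auto simp: prob_density_def)
  show "prob_space (dens p)"
  proof (rule prob_spaceI)
    have "emeasure (dens p) (space (dens p)) = (\<integral>\<^sup>+ x. ennreal (p x) * indicator UNIV x \<partial>lborel)"
      unfolding dens_def using pm by (subst emeasure_density) auto
    then show "emeasure (dens p) (space (dens p)) = 1" using int by simp
  qed
  show "sets (dens p) = sets borel" by (simp add: dens_def)
qed

lemma fix_H1: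
  assumes fp: "sed_fixpoint K t rho E \<nu>" and nu: "prob_space \<nu>" "sets \<nu> = sets borel"
    and rho: "rho \<in> borel_measurable borel" "\<And>x. 0 \<le> rho x" "\<And>x. rho x \<le> L"
    and D: "prob_space (dens rho)" and L: "L \<ge> 0"
  shows "H1 L \<nu>"
  unfolding H1_def
proof (intro conjI ballI nu)
  fix h :: "real \<Rightarrow> ennreal" assume hm[measurable]: "h \<in> borel_measurable borel"
  note nu(2)[measurable_cong]
  let ?D = "dens rho" and ?\<Pi> = "PiM {..<K} (\<lambda>_. \<nu>)"
  let ?F = "\<lambda>(v, \<gamma>). 1 / (v - E - t^2 * (\<Sum>i<K. \<gamma> i))"
  have Ds[measurable_cong]: "sets ?D = sets borel" by (simp add: dens_def)
  have Fm: "?F \<in> borel_measurable (?D \<Otimes>\<^sub>M ?\<Pi>)" by measurable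
  have eq: "\<nu> = distr (?D \<Otimes>\<^sub>M ?\<Pi>) borel ?F" using fp by (simp add: sed_fixpoint_def)
  interpret Dp: prob_space ?D by (rule D)
  interpret Pp: prob_space ?\<Pi> by (rule prob_space_PiM) (rule nu)
  interpret pair_sigma_finite ?D ?\<Pi> ..
  have "(\<integral>\<^sup>+ w. h w \<partial>\<nu>) = (\<integral>\<^sup>+ w. h w \<partial>distr (?D \<Otimes>\<^sub>M ?\<Pi>) borel ?F)"
    by (subst eq) simp
  also have "\<dots> = (\<integral>\<^sup>+ p. h (?F p) \<partial>(?D \<Otimes>\<^sub>M ?\<Pi>))"
    by (rule nn_integral_distr[OF Fm]) simp
  also have "\<dots> = (\<integral>\<^sup>+ \<gamma>. (\<integral>\<^sup>+ v. h (?F (v, \<gamma>)) \<partial>?D) \<partial>?\<Pi>)"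
    by (rule nn_integral_snd[symmetric]) measurable
  also have "\<dots> \<le> (\<integral>\<^sup>+ \<gamma>. ennreal L * (\<integral>\<^sup>+ z. h (1/z) \<partial>lborel) \<partial>?\<Pi>)"
  proof (rule nn_integral_mono)
    fix \<gamma> assume "\<gamma> \<in> space ?\<Pi>"
    define c where "c = E + t^2 * (\<Sum>i<K. \<gamma> i)"
    have Fv: "?F (v, \<gamma>) = 1 / (v - c)" for v by (simp add: c_def diff_diff_eq)
    have "(\<integral>\<^sup>+ v. h (?F (v, \<gamma>)) \<partial>?D) = (\<integral>\<^sup>+ v. ennreal (rho v) * h (1 / (v - c)) \<partial>lborel)"
      unfolding Fv dens_def using rho(1) by (subst nn_integral_density) auto
    also have "\<dots> \<le> (\<integral>\<^sup>+ v. ennreal L * h (1 / (v - c)) \<partial>lborel)"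
      using rho(3) by (intro nn_integral_mono mult_right_mono ennreal_leI) auto
    also have "\<dots> = ennreal L * (\<integral>\<^sup>+ v. h (1 / (v - c)) \<partial>lborel)"
      by (rule nn_integral_cmult) measurable
    also have "(\<integral>\<^sup>+ v. h (1 / (v - c)) \<partial>lborel) = (\<integral>\<^sup>+ z. h (1/z) \<partial>lborel)"
    proof -
      have "(\<integral>\<^sup>+ z. h (1/z) \<partial>lborel) = ennreal \<bar>1\<bar> * (\<integral>\<^sup>+ v. h (1/(- c + 1 * v)) \<partial>lborel)"
        by (rule nn_integral_real_affine) auto
      then show ?thesis by simp
    qed
    finally show "(\<integral>\<^sup>+ v. h (?F (v, \<gamma>)) \<partial>?D) \<le> ennreal L * (\<integral>\<^sup>+ z. h (1/z) \<partial>lborel)" .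
  qed
  also have "\<dots> = ennreal L * (\<integral>\<^sup>+ z. h (1/z) \<partial>lborel)"
    by (simp add: Pp.emeasure_space_1)
  finally show "(\<integral>\<^sup>+ w. h w \<partial>\<nu>) \<le> ennreal L * (\<integral>\<^sup>+ z. h (1/z) \<partial>lborel)" .
qed



lemma conv_merge:
  fixes k m :: nat and t :: real and \<nu>1 \<nu>2 :: "real measure"
  assumes p1: "prob_space \<nu>1" and p2: "prob_space \<nu>2"
    and s1[measurable_cong]: "sets \<nu>1 = sets borel" and s2[measurable_cong]: "sets \<nu>2 = sets borel"
  defines "\<mu>' \<equiv> \<lambda>j::nat. if j < k then \<nu>1 else \<nu>2"
  shows "sed_sum k t \<nu>1 \<star> sed_sum m t \<nu>2 = distr (PiM {..<k+m} \<mu>') borel (\<lambda>\<omega>. t^2 * (\<Sum>j<k+m. \<omega> j))"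
proof -
  have sm[measurable_cong]: "sets (\<mu>' j) = sets borel" for j by (simp add: \<mu>'_def s1 s2)
  have pm: "prob_space (\<mu>' j)" for j by (simp add: \<mu>'_def p1 p2)
  let ?P1 = "PiM {..<k} \<mu>'" and ?P2 = "PiM {k..<k+m} \<mu>'"
  let ?s1 = "\<lambda>\<omega>. t^2 * (\<Sum>j<k. \<omega> j)" and ?s2 = "\<lambda>\<omega>. t^2 * (\<Sum>j\<in>{k..<k+m}. \<omega> j)"
  have S1: "sed_sum k t \<nu>1 = distr ?P1 borel ?s1"
    unfolding sed_sum_def by (intro distr_cong PiM_cong) (auto simp: \<mu>'_def)
  have S2: "sed_sum m t \<nu>2 = distr ?P2 borel ?s2"
  proof -
    have r: "distr ?P2 (PiM {..<m} (\<lambda>i. \<mu>' (i+k))) (\<lambda>\<omega>. \<lambda>n\<in>{..<m}. \<omega> (n+k)) = PiM {..<m} (\<lambda>i. \<mu>' (i+k))"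
      by (rule distr_PiM_reindex) (auto simp: pm inj_on_def)
    have c: "PiM {..<m} (\<lambda>i. \<mu>' (i+k)) = PiM {..<m} (\<lambda>_. \<nu>2)"
      by (intro PiM_cong) (auto simp: \<mu>'_def)
    have rm: "(\<lambda>\<omega>. \<lambda>n\<in>{..<m}. \<omega> (n+k)) \<in> measurable ?P2 (PiM {..<m} (\<lambda>i. \<mu>' (i+k)))"
      by (intro measurable_restrict measurable_component_singleton) auto
    have gm: "(\<lambda>\<gamma>. t^2 * (\<Sum>i<m. \<gamma> i)) \<in> borel_measurable (PiM {..<m} (\<lambda>i. \<mu>' (i+k)))" by measurable
    have "sed_sum m t \<nu>2 = distr (PiM {..<m} (\<lambda>i. \<mu>' (i+k))) borel (\<lambda>\<gamma>. t^2 * (\<Sum>i<m. \<gamma> i))"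
      unfolding sed_sum_def c ..
    also have "\<dots> = distr (distr ?P2 (PiM {..<m} (\<lambda>i. \<mu>' (i+k))) (\<lambda>\<omega>. \<lambda>n\<in>{..<m}. \<omega> (n+k))) borel (\<lambda>\<gamma>. t^2 * (\<Sum>i<m. \<gamma> i))"
      unfolding r ..
    also have "\<dots> = distr ?P2 borel ((\<lambda>\<gamma>. t^2 * (\<Sum>i<m. \<gamma> i)) \<circ> (\<lambda>\<omega>. \<lambda>n\<in>{..<m}. \<omega> (n+k)))"
      by (rule distr_distr[OF gm rm])
    also have "\<dots> = distr ?P2 borel ?s2"
    proof (rule distr_cong)
      fix \<omega> assume "\<omega> \<in> space ?P2"
      have "(\<Sum>i<m. \<omega> (i+k)) = (\<Sum>j\<in>{k..<k+m}. \<omega> j)"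
      proof -
        have "(\<Sum>j\<in>{k..<k+m}. \<omega> j) = (\<Sum>i\<in>{0..<m}. \<omega> (i+k))"
          using sum.shift_bounds_nat_ivl[of \<omega> 0 k m] by (simp add: add.commute)
        then show ?thesis by (simp add: atLeast0LessThan)
      qed
      then show "((\<lambda>\<gamma>. t^2 * (\<Sum>i<m. \<gamma> i)) \<circ> (\<lambda>\<omega>. \<lambda>n\<in>{..<m}. \<omega> (n+k))) \<omega> = ?s2 \<omega>" by simp
    qed auto
    finally show ?thesis .
  qed
  interpret P1: prob_space ?P1 by (rule prob_space_PiM) (rule pm)
  interpret P2: prob_space ?P2 by (rule prob_space_PiM) (rule pm)
  interpret ps: product_sigma_finite \<mu>'
    unfolding product_sigma_finite_def using pm by (auto intro: prob_space_imp_sigma_finite)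
  have s1m: "?s1 \<in> borel_measurable ?P1" by measurable
  have s2m: "?s2 \<in> borel_measurable ?P2" by measurable
  have sf: "sigma_finite_measure (distr ?P2 borel ?s2)"
    by (rule prob_space_imp_sigma_finite, rule P2.prob_space_distr, rule s2m)
  have "sed_sum k t \<nu>1 \<star> sed_sum m t \<nu>2 = distr (distr ?P1 borel ?s1 \<Otimes>\<^sub>M distr ?P2 borel ?s2) borel (\<lambda>(x, y). x + y)"
    unfolding S1 S2 convolution_def ..
  also have "\<dots> = distr (distr (?P1 \<Otimes>\<^sub>M ?P2) (borel \<Otimes>\<^sub>M borel) (\<lambda>(x, y). (?s1 x, ?s2 y))) borel (\<lambda>(x, y). x + y)"
    by (subst pair_measure_distr[OF s1m s2m sf]) (rule refl)
  also have "\<dots> = distr (?P1 \<Otimes>\<^sub>M ?P2) borel ((\<lambda>(x, y). x + y) \<circ> (\<lambda>(x, y). (?s1 x, ?s2 y)))"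
    by (rule distr_distr) measurable
  also have "\<dots> = distr (?P1 \<Otimes>\<^sub>M ?P2) borel ((\<lambda>\<omega>. t^2 * (\<Sum>j<k+m. \<omega> j)) \<circ> merge {..<k} {k..<k+m})"
  proof (rule distr_cong)
    fix p assume p: "p \<in> space (?P1 \<Otimes>\<^sub>M ?P2)"
    obtain x y where xy: "p = (x, y)" by (cases p)
    have "(\<Sum>j<k+m. merge {..<k} {k..<k+m} (x, y) j) = (\<Sum>j<k. x j) + (\<Sum>j\<in>{k..<k+m}. y j)"
    proof -
      have u: "{..<k+m} = {..<k} \<union> {k..<k+m}" by auto
      have "(\<Sum>j<k+m. merge {..<k} {k..<k+m} (x, y) j) = (\<Sum>j<k. merge {..<k} {k..<k+m} (x, y) j) + (\<Sum>j\<in>{k..<k+m}. merge {..<k} {k..<k+m} (x, y) j)"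
        unfolding u by (rule sum.union_disjoint) auto
      also have "(\<Sum>j<k. merge {..<k} {k..<k+m} (x, y) j) = (\<Sum>j<k. x j)"
        by (intro sum.cong) (auto simp: merge_def)
      also have "(\<Sum>j\<in>{k..<k+m}. merge {..<k} {k..<k+m} (x, y) j) = (\<Sum>j\<in>{k..<k+m}. y j)"
        by (intro sum.cong) (auto simp: merge_def)
      finally show ?thesis .
    qed
    then show "((\<lambda>(x, y). x + y) \<circ> (\<lambda>(x, y). (?s1 x, ?s2 y))) p = ((\<lambda>\<omega>. t^2 * (\<Sum>j<k+m. \<omega> j)) \<circ> merge {..<k} {k..<k+m}) p"
      by (simp add: xy distrib_left)
  qed auto
  also have "\<dots> = distr (distr (?P1 \<Otimes>\<^sub>M ?P2) (PiM ({..<k} \<union> {k..<k+m}) \<mu>') (merge {..<k} {k..<k+m})) borel (\<lambda>\<omega>. t^2 * (\<Sum>j<k+m. \<omega> j))"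
  proof -
    have u: "{..<k} \<union> {k..<k+m} = {..<k+m}" by auto
    have mm: "merge {..<k} {k..<k+m} \<in> measurable (?P1 \<Otimes>\<^sub>M ?P2) (PiM ({..<k} \<union> {k..<k+m}) \<mu>')"
      by (rule measurable_merge)
    have Sm: "(\<lambda>\<omega>. t^2 * (\<Sum>j<k+m. \<omega> j)) \<in> borel_measurable (PiM ({..<k} \<union> {k..<k+m}) \<mu>')"
      unfolding u by measurable
    show ?thesis by (rule distr_distr[symmetric, OF Sm mm])
  qed
  also have "distr (?P1 \<Otimes>\<^sub>M ?P2) (PiM ({..<k} \<union> {k..<k+m}) \<mu>') (merge {..<k} {k..<k+m}) = PiM ({..<k} \<union> {k..<k+m}) \<mu>'"
    by (rule ps.distr_merge) auto
  also have "{..<k} \<union> {k..<k+m} = {..<k+m}" by auto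
  finally show ?thesis .
qed



definition Cf :: "real \<Rightarrow> real \<Rightarrow> real" where
  "Cf L A = (L + 1) * (2 * C0 L A + 257)"

lemma powr43_small: "\<bar>x::real\<bar> < 64 \<Longrightarrow> \<bar>x\<bar> powr (4/3) \<le> 256"
proof -
  assume "\<bar>x\<bar> < 64"
  then have "\<bar>x\<bar> powr (4/3) \<le> 64 powr (4/3)" by (intro powr_mono2) auto
  also have "(64::real) powr (4/3) = 256"
  proof -
    have "(64::real) = 2 powr 6" by simp
    then have "(64::real) powr (4/3) = 2 powr (6*(4/3))" by (simp add: powr_powr)
    also have "\<dots> = 2 powr (real 8)" by simp
    also have "\<dots> = 256" by (subst powr_realpow) auto
    finally show ?thesis .
  qed
  finally show ?thesis .
qed

lemma powr23_big: "\<bar>x::real\<bar> \<ge> 64 \<Longrightarrow> \<bar>x\<bar> powr (2/3) \<ge> 16"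
proof -
  assume "\<bar>x\<bar> \<ge> 64"
  then have "64 powr (2/3) \<le> \<bar>x\<bar> powr (2/3)" by (intro powr_mono2) auto
  moreover have "(64::real) powr (2/3) = 16"
  proof -
    have "(64::real) = 2 powr 6" by simp
    then have "(64::real) powr (2/3) = 2 powr (6*(2/3))" by (simp add: powr_powr)
    also have "\<dots> = 2 powr (real 4)" by simp
    also have "\<dots> = 16" by (subst powr_realpow) auto
    finally show ?thesis .
  qed
  ultimately show ?thesis by simp
qed

lemma Cf_ge: "L > 0 \<Longrightarrow> 2 * C0 L A + 257 \<le> Cf L A" "L > 0 \<Longrightarrow> L * (2 * C0 L A + 1) \<le> Cf L A"
  using C0_nonneg[of L A] by (auto simp: Cf_def algebra_simps)

lemma q_bound:
  fixes q c :: real assumes "q \<ge> 1" "c \<ge> 0"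
  shows "c / q \<le> 2 * c / (1 + q)"
proof -
  have "c \<le> c * q" using assms by (metis mult_left_mono mult_1_right)
  then have "c * (1 + q) \<le> 2 * c * q" by (simp add: algebra_simps)
  then show ?thesis using assms by (simp add: field_simps)
qed

lemma interval_final:
  fixes L A t x :: real and I :: "nat set"
  assumes L: "L > 0" and A: "A \<ge> 0" and H: "\<And>j. H1 L (\<mu> j)" and I: "finite I"
    and Nt: "real (card I) * \<bar>t\<bar> \<le> A" and tA: "\<bar>t\<bar> \<le> A"
  shows "measure (PiM I \<mu>) {\<omega>\<in>space (PiM I \<mu>). t^2 * (\<Sum>j\<in>I. \<omega> j) \<in> {x-2..x+2}}
     \<le> Cf L A / (1 + \<bar>x\<bar> powr (4/3))"
proof (cases "\<bar>x\<bar> \<ge> 64")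
  case True
  have q1: "\<bar>x\<bar> powr (4/3) \<ge> 1"
    using True by (intro ge_one_powr_ge_zero) auto
  have "measure (PiM I \<mu>) {\<omega>\<in>space (PiM I \<mu>). t^2 * (\<Sum>j\<in>I. \<omega> j) \<in> {x-2..x+2}} \<le> C0 L A / \<bar>x\<bar> powr (4/3)"
    by (rule interval_bound[OF L A H I Nt tA True]) (use powr23_big[OF True] in auto)
  also have "\<dots> \<le> 2 * C0 L A / (1 + \<bar>x\<bar> powr (4/3))"
    by (rule q_bound[OF q1 C0_nonneg]) (use L in simp)
  also have "\<dots> \<le> Cf L A / (1 + \<bar>x\<bar> powr (4/3))"
    using Cf_ge(1)[OF L, of A] by (intro divide_right_mono) (auto intro: add_nonneg_nonneg)
  finally show ?thesis .
next
  case False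
  interpret prob_space "PiM I \<mu>" by (rule prob_space_PiM) (use H in \<open>auto intro: H1_prob\<close>)
  have "measure (PiM I \<mu>) {\<omega>\<in>space (PiM I \<mu>). t^2 * (\<Sum>j\<in>I. \<omega> j) \<in> {x-2..x+2}} \<le> 1"
    by (rule prob_le_1)
  also have "1 \<le> Cf L A / (1 + \<bar>x\<bar> powr (4/3))"
  proof -
    have "\<bar>x\<bar> powr (4/3) \<le> 256" using False by (intro powr43_small) simp
    moreover have "0 \<le> C0 L A" using L by (intro C0_nonneg) simp
    ultimately have "1 + \<bar>x\<bar> powr (4/3) \<le> Cf L A"
      using Cf_ge(1)[OF L, of A] by linarith
    moreover have "0 < 1 + \<bar>x\<bar> powr (4/3)" by (simp add: add_pos_nonneg)
    ultimately show ?thesis by (simp add: le_divide_eq)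
  qed
  finally show ?thesis .
qed

lemma rho_final:
  fixes L A t y :: real and n :: nat
  assumes L: "L > 0" and A: "A \<ge> 0" and H: "H1 L \<nu>"
    and Nt: "real n * \<bar>t\<bar> \<le> A" and tA: "\<bar>t\<bar> \<le> A"
    and rm: "rho \<in> borel_measurable borel" and r0: "\<And>z. 0 \<le> rho z" and rL: "\<And>z. rho z \<le> L / (1 + z^2)"
  shows "(\<integral>\<omega>. rho (y + t^2 * (\<Sum>j<n. \<omega> j)) \<partial>PiM {..<n} (\<lambda>_. \<nu>)) \<le> Cf L A / (1 + \<bar>y\<bar> powr (4/3))"
proof -
  let ?P = "PiM {..<n} (\<lambda>_. \<nu>)"
  interpret prob_space ?P by (rule prob_space_PiM) (use H in \<open>auto intro: H1_prob\<close>)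
  note H1_sets[OF H, measurable_cong]
  note rm[measurable]
  have rl: "rho z \<le> L" for z
  proof -
    have "0 < 1 + z^2" by (simp add: add_pos_nonneg)
    then have "L / (1 + z^2) \<le> L / 1" using L by (intro divide_left_mono) auto
    then show ?thesis using rL[of z] by simp
  qed
  have fm: "(\<lambda>\<omega>. rho (y + t^2 * (\<Sum>j<n. \<omega> j))) \<in> borel_measurable ?P" by measurable
  have fi: "integrable ?P (\<lambda>\<omega>. rho (y + t^2 * (\<Sum>j<n. \<omega> j)))"
    by (rule integrable_const_bound[where B=L]) (use fm r0 rl in auto)
  show ?thesis
  proof (cases "\<bar>y\<bar> \<ge> 64")
    case False
    have "(\<integral>\<omega>. rho (y + t^2 * (\<Sum>j<n. \<omega> j)) \<partial>?P) \<le> (\<integral>\<omega>. L \<partial>?P)"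
      by (rule integral_mono[OF fi]) (use rl in auto)
    also have "\<dots> = L" by (simp add: prob_space)
    also have "L \<le> Cf L A / (1 + \<bar>y\<bar> powr (4/3))"
    proof -
      have "L * (1 + \<bar>y\<bar> powr (4/3)) \<le> L * 257" using powr43_small[of y] False L by (intro mult_left_mono) auto
      also have "\<dots> \<le> Cf L A" using C0_nonneg[of L A] L by (simp add: Cf_def algebra_simps)
      moreover have "0 < 1 + \<bar>y\<bar> powr (4/3)" by (simp add: add_pos_nonneg)
      ultimately show ?thesis by (simp add: le_divide_eq)
    qed
    finally show ?thesis .
  next
    case True
    define h where "h = \<bar>y\<bar> powr (2/3)"
    define q where "q = \<bar>y\<bar> powr (4/3)"
    have hq: "h^2 = q" unfolding h_def q_def using True by (subst powr_power) auto
    have h0: "0 \<le> h" by (simp add: h_def)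
    have q1: "q \<ge> 1" unfolding q_def using True by (intro ge_one_powr_ge_zero) auto
    let ?A = "{\<omega>\<in>space ?P. t^2 * (\<Sum>j\<in>{..<n}. \<omega> j) \<in> {(-y)-h..(-y)+h}}"
    have Am: "?A \<in> sets ?P" by measurable
    have mA: "measure ?P ?A \<le> C0 L A / q"
      unfolding q_def using interval_bound[OF L A H _ _ tA, of "{..<n}" "-y" h] Nt True h0
      by (simp add: h_def)
    have pw: "rho (y + t^2 * (\<Sum>j<n. \<omega> j)) \<le> L * indicator ?A \<omega> + L / (1 + q)" if w: "\<omega> \<in> space ?P" for \<omega>
    proof (cases "\<omega> \<in> ?A")
      case True
      have "0 \<le> L / (1 + q)" using L q1 by simp
      then show ?thesis using True rl[of "y + t^2 * (\<Sum>j<n. \<omega> j)"] by simp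
    next
      case False
      define S where "S = t^2 * (\<Sum>j<n. \<omega> j)"
      have nS: "\<not> ((-y)-h \<le> S \<and> S \<le> (-y)+h)" using False w unfolding S_def by simp
      have "h < \<bar>y + S\<bar>"
      proof (cases "(-y)-h \<le> S")
        case True then have "S > (-y)+h" using nS by simp
        then show ?thesis by simp
      next
        case False then show ?thesis by simp
      qed
      then have "h^2 < \<bar>y + S\<bar>^2" using h0 by (intro power_strict_mono) auto
      then have "h^2 < (y + S)^2" by simp
      then have "L / (1 + (y + S)^2) \<le> L / (1 + q)"
        using L hq q1 by (intro divide_left_mono) auto
      then have "L / (1 + (y + t^2 * (\<Sum>j<n. \<omega> j))^2) \<le> L / (1 + q)" by (simp add: S_def)
      then show ?thesis using rL[of "y + t^2 * (\<Sum>j<n. \<omega> j)"] False by simp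
    qed
    have gi: "integrable ?P (\<lambda>\<omega>. L * indicator ?A \<omega> + L / (1 + q))"
      using Am by (intro Bochner_Integration.integrable_add integrable_mult_right integrable_real_indicator integrable_const)
        (auto simp: emeasure_eq_measure)
    have "(\<integral>\<omega>. rho (y + t^2 * (\<Sum>j<n. \<omega> j)) \<partial>?P) \<le> (\<integral>\<omega>. L * indicator ?A \<omega> + L / (1 + q) \<partial>?P)"
      by (rule integral_mono[OF fi gi pw])
    also have "\<dots> = L * measure ?P ?A + L / (1 + q)"
    proof -
      have i1: "integrable ?P (\<lambda>\<omega>. L * indicator ?A \<omega>)"
        using Am by (intro integrable_mult_right integrable_real_indicator) (auto simp: emeasure_eq_measure)
      have i2: "integrable ?P (\<lambda>\<omega>. L / (1 + q))" by simp
      have "(\<integral>\<omega>. L * indicator ?A \<omega> + L / (1 + q) \<partial>?P) = (\<integral>\<omega>. L * indicator ?A \<omega> \<partial>?P) + (\<integral>\<omega>. L / (1 + q) \<partial>?P)"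
        by (rule Bochner_Integration.integral_add[OF i1 i2])
      also have "(\<integral>\<omega>. L * indicator ?A \<omega> \<partial>?P) = L * measure ?P ?A"
        using sets.sets_into_space[OF Am] by (simp add: Int_absorb2)
      also have "(\<integral>\<omega>. L / (1 + q) \<partial>?P) = L / (1 + q)" by (simp add: prob_space)
      finally show ?thesis .
    qed
    also have "\<dots> \<le> L * (2 * C0 L A / (1 + q)) + L / (1 + q)"
    proof -
      have "measure ?P ?A \<le> 2 * C0 L A / (1 + q)"
        using mA q_bound[OF q1 C0_nonneg[of L A]] L by simp
      then have "L * measure ?P ?A \<le> L * (2 * C0 L A / (1 + q))" using L by (intro mult_left_mono) auto
      then show ?thesis by simp
    qed
    also have "\<dots> = L * (2 * C0 L A + 1) / (1 + q)" by (simp add: add_divide_distrib algebra_simps)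
    also have "\<dots> \<le> Cf L A / (1 + q)"
      using Cf_ge(2)[OF L, of A] q1 by (intro divide_right_mono) auto
    finally show ?thesis by (simp add: q_def)
  qed
qed



theorem lemma6p2:
  fixes L G :: real and rho :: "real \<Rightarrow> real"
  assumes "regular L rho" and "G > 0"
  shows "\<exists>C>0. \<forall>(K::nat) (g::real) (p::real \<Rightarrow> real \<Rightarrow> real).
     (K \<ge> 2 \<and> 0 \<le> g \<and> g \<le> G \<and>
      (\<forall>E. prob_density (p E) \<and>
           sed_fixpoint K (g / (real K * ln (real K))) rho E (dens (p E))))
     \<longrightarrow>
     (\<forall>E1 E2 k x. k \<le> K - 1 \<longrightarrow>
        measure (sed_sum k (g / (real K * ln (real K))) (dens (p E1)) \<star>
                 sed_sum (K - k - 1) (g / (real K * ln (real K))) (dens (p E2))) {x - 2 .. x + 2}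
          \<le> C / (1 + \<bar>x\<bar> powr (4/3))) \<and>
     (\<forall>E x. rhoE K (g / (real K * ln (real K))) rho E (dens (p E)) x
          \<le> C / (1 + \<bar>x + E\<bar> powr (4/3)))"
proof -
  have L: "L > 0" and rpd: "prob_density rho" and rL: "\<And>z. rho z \<le> L / (1 + z^2)"
    using assms(1) by (auto simp: regular_def)
  have rm: "rho \<in> borel_measurable borel" and r0: "\<And>z. 0 \<le> rho z"
    using rpd by (auto simp: prob_density_def)
  have rl: "rho z \<le> L" for z
  proof -
    have "0 < 1 + z^2" by (simp add: add_pos_nonneg)
    then have "L / (1 + z^2) \<le> L / 1" using L by (intro divide_left_mono) auto
    then show ?thesis using rL[of z] by simp
  qed
  have Dp: "prob_space (dens rho)" by (rule dens_prob[OF rpd])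
  define A where "A = G / ln 2"
  have A0: "A \<ge> 0" using assms(2) by (simp add: A_def)
  define C where "C = Cf L A"
  have C0p: "C > 0"
    using Cf_ge(1)[OF L, of A] C0_nonneg[of L A] L unfolding C_def by linarith
  show ?thesis
  proof (rule exI[of _ C], rule conjI[OF C0p], intro allI impI)
    fix K :: nat and g :: real and p :: "real \<Rightarrow> real \<Rightarrow> real"
    assume hyp: "K \<ge> 2 \<and> 0 \<le> g \<and> g \<le> G \<and>
      (\<forall>E. prob_density (p E) \<and> sed_fixpoint K (g / (real K * ln (real K))) rho E (dens (p E)))"
    define t where "t = g / (real K * ln (real K))"
    have K2: "K \<ge> 2" and g0: "0 \<le> g" and gG: "g \<le> G" using hyp by auto
    have pd: "prob_density (p E)" and fp: "sed_fixpoint K t rho E (dens (p E))" for E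
      using hyp by (auto simp: t_def)
    have lnK: "ln (real K) \<ge> ln 2" using K2 by simp
    have ln2: "ln (2::real) > 0" by simp
    have lnK0: "ln (real K) > 0" using lnK ln2 by linarith
    have Kpos: "real K > 0" using K2 by simp
    have t0: "t \<ge> 0" using g0 lnK0 Kpos by (simp add: t_def)
    have Kt: "real K * t \<le> A"
    proof -
      have "real K * t = g / ln (real K)" using Kpos by (simp add: t_def)
      also have "\<dots> \<le> G / ln (real K)" using gG lnK0 by (intro divide_right_mono) auto
      also have "\<dots> \<le> G / ln 2" using assms(2) lnK ln2 lnK0 by (intro divide_left_mono) auto
      finally show ?thesis by (simp add: A_def)
    qed
    have tA: "\<bar>t\<bar> \<le> A"
    proof -
      have "t \<le> real K * t" using t0 K2 by (metis mult_right_mono mult_1 of_nat_1 of_nat_mono one_le_numeral order_trans)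
      then show ?thesis using Kt t0 by simp
    qed
    have NtA: "real n * \<bar>t\<bar> \<le> A" if "n \<le> K" for n
    proof -
      have "real n * t \<le> real K * t" using that t0 by (intro mult_right_mono) auto
      then show ?thesis using Kt t0 by simp
    qed
    have H: "H1 L (dens (p E))" for E
      by (rule fix_H1[OF fp dens_prob[OF pd] rm r0 rl Dp]) (use L in simp)
    have part1: "\<forall>E1 E2 k x. k \<le> K - 1 \<longrightarrow>
        measure (sed_sum k (g / (real K * ln (real K))) (dens (p E1)) \<star>
                 sed_sum (K - k - 1) (g / (real K * ln (real K))) (dens (p E2))) {x - 2 .. x + 2}
          \<le> C / (1 + \<bar>x\<bar> powr (4/3))"
    proof (intro allI impI)
      fix E1 E2 :: real and k :: nat and x :: real
      assume k: "k \<le> K - 1"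
      define m where "m = K - k - 1"
      define \<mu>' where "\<mu>' = (\<lambda>j::nat. if j < k then dens (p E1) else dens (p E2))"
      have Hm: "H1 L (\<mu>' j)" for j by (simp add: \<mu>'_def H)
      note sm = H1_sets[OF Hm, measurable_cong]
      have cm: "sed_sum k t (dens (p E1)) \<star> sed_sum m t (dens (p E2)) =
          distr (PiM {..<k+m} \<mu>') borel (\<lambda>\<omega>. t^2 * (\<Sum>j<k+m. \<omega> j))"
        unfolding \<mu>'_def by (rule conv_merge) (simp_all add: dens_prob[OF pd])
      have Sm: "(\<lambda>\<omega>. t^2 * (\<Sum>j<k+m. \<omega> j)) \<in> borel_measurable (PiM {..<k+m} \<mu>')" by measurable
      have "measure (sed_sum k t (dens (p E1)) \<star> sed_sum m t (dens (p E2))) {x - 2 .. x + 2}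
          = measure (PiM {..<k+m} \<mu>') ((\<lambda>\<omega>. t^2 * (\<Sum>j<k+m. \<omega> j)) -` {x - 2 .. x + 2} \<inter> space (PiM {..<k+m} \<mu>'))"
        unfolding cm by (rule measure_distr[OF Sm]) simp
      also have "(\<lambda>\<omega>. t^2 * (\<Sum>j<k+m. \<omega> j)) -` {x - 2 .. x + 2} \<inter> space (PiM {..<k+m} \<mu>')
          = {\<omega>\<in>space (PiM {..<k+m} \<mu>'). t^2 * (\<Sum>j\<in>{..<k+m}. \<omega> j) \<in> {x-2..x+2}}" by auto
      also have "measure (PiM {..<k+m} \<mu>') \<dots> \<le> Cf L A / (1 + \<bar>x\<bar> powr (4/3))"
      proof (rule interval_final[OF L A0 Hm])
        show "finite {..<k+m}" by simp
        have "k + m \<le> K" using k K2 unfolding m_def by simp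
        then show "real (card {..<k+m}) * \<bar>t\<bar> \<le> A" using NtA[of "k+m"] by simp
        show "\<bar>t\<bar> \<le> A" by (rule tA)
      qed
      finally show "measure (sed_sum k (g / (real K * ln (real K))) (dens (p E1)) \<star>
                 sed_sum (K - k - 1) (g / (real K * ln (real K))) (dens (p E2))) {x - 2 .. x + 2}
          \<le> C / (1 + \<bar>x\<bar> powr (4/3))" by (simp add: t_def m_def C_def)
    qed
    have part2: "\<forall>E x. rhoE K (g / (real K * ln (real K))) rho E (dens (p E)) x \<le> C / (1 + \<bar>x + E\<bar> powr (4/3))"
    proof (intro allI)
      fix E x :: real
      note sm = H1_sets[OF H[of E], measurable_cong]
      note rm[measurable]
      have Sm: "(\<lambda>\<gamma>. t^2 * (\<Sum>i<K-1. \<gamma> i)) \<in> borel_measurable (PiM {..<K-1} (\<lambda>_. dens (p E)))" by measurable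
      have "rhoE K t rho E (dens (p E)) x = (\<integral>\<omega>. rho (x + E + t^2 * (\<Sum>j<K-1. \<omega> j)) \<partial>PiM {..<K-1} (\<lambda>_. dens (p E)))"
        unfolding rhoE_def sed_sum_def by (rule integral_distr[OF Sm]) measurable
      also have "\<dots> \<le> Cf L A / (1 + \<bar>x + E\<bar> powr (4/3))"
        by (rule rho_final[OF L A0 H NtA tA rm r0 rL]) simp
      finally show "rhoE K (g / (real K * ln (real K))) rho E (dens (p E)) x \<le> C / (1 + \<bar>x + E\<bar> powr (4/3))"
        by (simp add: t_def C_def)
    qed
    show "(\<forall>E1 E2 k x. k \<le> K - 1 \<longrightarrow>
        measure (sed_sum k (g / (real K * ln (real K))) (dens (p E1)) \<star>
                 sed_sum (K - k - 1) (g / (real K * ln (real K))) (dens (p E2))) {x - 2 .. x + 2}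
          \<le> C / (1 + \<bar>x\<bar> powr (4/3))) \<and>
     (\<forall>E x. rhoE K (g / (real K * ln (real K))) rho E (dens (p E)) x \<le> C / (1 + \<bar>x + E\<bar> powr (4/3)))"
      using part1 part2 by blast
  qed
qed


end
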